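(* Let $\mathcal C\subseteq[0,1]^n$ be a down-closed convex set with $\mathbf 0\in\mathcal C$. Let $f_1,\dots,f_T:[0,1]^n\to\mathbb R_+$ be a sequence fixed in advance, each differentiable, DR-submodular and $L_0$-smooth. Suppose a stochastic gradient oracle is available for every $f_t$: for every $\mathbf x\in[0,1]^n$ it returns a random vector $\widetilde\nabla f_t(\mathbf x)$ with $\mathbb E(\widetilde\nabla f_t(\mathbf x)\mid\mathbf x)=\nabla f_t(\mathbf x)$ and $\mathbb E\|\widetilde\nabla f_t(\mathbf x)-\nabla f_t(\mathbf x)\|^2\le\sigma^2$. Suppose each of the online linear maximization oracles $\mathcal E^{(1)},\dots,\mathcal E^{(K)}$ over $\mathcal C$ used by Meta-MFW has regret at most $M_0\sqrt t$ at every horizon $t$. Run Meta-MFW with $\eta_k=\frac{2}{(k+3)^{2/3}}$ for $k\in[K]$. Then $$\frac1e\sum_{t=1}^T f_t(\mathbf x^* )-\sum_{t=1}^T\mathbb E\big(f_t(\mathbf y_t)\big)\le M_0\sqrt T+L_0 r^2(\mathcal C)\frac{T}{2K}+\frac{r(\mathcal C)}{2}(3N_0+1)\frac{T}{K^{1/3}},$$ where $\mathbf x^*\in\arg\max_{\mathbf x\in\mathcal C}\sum_{t=1}^T f_t(\mathbf x)$ and $N_0=\max\{4^{2/3}\max_{t\in[T]}\|\nabla f_t(\mathbf x_t^{(1)})\|^2,\;4\sigma^2+6(L_0r(\mathcal C))^2\}$ (the maximum also taken over all realizations of $\mathbf x_t^{(1)}$).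
   Context: Notation: inequalities between vectors are coordinatewise; $\odot$ is the coordinatewise product; $\mathbf 0,\mathbf 1$ are the all-zeros and all-ones vectors; $\|\cdot\|$ is the Euclidean norm; $[K]=\{1,\dots,K\}$. A differentiable $f:[0,1]^n\to\mathbb R_+$ is DR-submodular if $\nabla f(\mathbf x)\le\nabla f(\mathbf y)$ whenever $\mathbf x\ge\mathbf y$; it is $L_0$-smooth if $\|\nabla f(\mathbf x)-\nabla f(\mathbf y)\|\le L_0\|\mathbf x-\mathbf y\|$ for all $\mathbf x,\mathbf y\in[0,1]^n$. A set $\mathcal C\subseteq[0,1]^n$ is down-closed if $\mathbf y\in\mathcal C$ and $\mathbf 0\le\mathbf x\le\mathbf y$ imply $\mathbf x\in\mathcal C$. $r(\mathcal C)=\max_{\mathbf x\in\mathcal C}\|\mathbf x\|$, $\mathrm{diam}(\mathcal C)=\max_{\mathbf x,\mathbf y\in\mathcal C}\|\mathbf x-\mathbf y\|$. An online linear maximization oracle over a set $D$ is an online algorithm that in each of its rounds $s=1,2,\dots$ outputs $\mathbf v_s\in D$ and then receives a vector $\mathbf c_s$ (the linear payoff $\langle\mathbf c_s,\cdot\rangle$); it has regret at most $M_0\sqrt t$ at horizon $t$ if $\max_{\mathbf u\in D}\sum_{s=1}^t\langle\mathbf c_s,\mathbf u\rangle-\sum_{s=1}^t\langle\mathbf c_s,\mathbf v_s\rangle\le M_0\sqrt t$. Meta-MFW (Meta-Measured Frank-Wolfe) with parameters $K$ and $(\eta_k)_{k\in[K]}$ uses $K$ such oracles $\mathcal E^{(1)},\dots,\mathcal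 E^{(K)}$ over $\mathcal C$. For each round $t=1,\dots,T$: set $\mathbf x_t^{(0)}=\mathbf 0$; for $k=1,\dots,K$, let $\mathbf v_t^{(k)}\in\mathcal C$ be the current output of $\mathcal E^{(k)}$ and set $\mathbf x_t^{(k)}=\mathbf x_t^{(k-1)}+\frac1K\mathbf v_t^{(k)}\odot(\mathbf 1-\mathbf x_t^{(k-1)})$. Play $\mathbf y_t=\mathbf x_t^{(K)}$, receive $f_t(\mathbf y_t)$ and access to the stochastic gradient oracle of $f_t$. Set $\mathbf g_t^{(0)}=\mathbf 0$ and for $k=1,\dots,K$: $\mathbf g_t^{(k)}=(1-\eta_k)\mathbf g_t^{(k-1)}+\eta_k\widetilde\nabla f_t(\mathbf x_t^{(k)})$, and feed the linear payoff vector $\mathbf g_t^{(k)}\odot(\mathbf 1-\mathbf x_t^{(k)})$ to $\mathcal E^{(k)}$ (so that $\mathcal E^{(k)}$ receives payoff $\langle\mathbf g_t^{(k)}\odot(\mathbf 1-\mathbf x_t^{(k)}),\mathbf v_t^{(k)}\rangle$). Expectations are over all randomness of the stochastic gradients. *)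

theory Defs
  imports "HOL-Analysis.Analysis" "HOL-Probability.Probability"
begin

definition unit_cube :: "(real^'n) set" where
  "unit_cube = {x. \<forall>i. 0 \<le> x $ i \<and> x $ i \<le> 1}"

definition vle :: "real^'n \<Rightarrow> real^'n \<Rightarrow> bool" where
  "vle x y \<longleftrightarrow> (\<forall>i. x $ i \<le> y $ i)"

definition had :: "real^'n \<Rightarrow> real^'n \<Rightarrow> real^'n" where
  "had x y = (\<chi> i. x $ i * y $ i)"

definition ones :: "real^'n" where
  "ones = (\<chi> i. 1)"

definition down_closed :: "(real^'n) set \<Rightarrow> bool" where
  "down_closed C \<longleftrightarrow> (\<forall>x y. y \<in> C \<and> vle 0 x \<and> vle x y \<longrightarrow> x \<in> C)"

text \<open>r(C) = max of norms over C (written as a supremum; equal to the max whenever it exists).\<close>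
definition radius :: "(real^'n) set \<Rightarrow> real" where
  "radius C = (SUP x\<in>C. norm x)"

definition DR_submodular :: "(real^'n \<Rightarrow> real) \<Rightarrow> (real^'n \<Rightarrow> real^'n) \<Rightarrow> bool" where
  "DR_submodular f df \<longleftrightarrow>
     (\<forall>x\<in>unit_cube. (f has_derivative (\<lambda>h. df x \<bullet> h)) (at x within unit_cube)) \<and>
     (\<forall>x\<in>unit_cube. \<forall>y\<in>unit_cube. vle y x \<longrightarrow> vle (df x) (df y))"

definition smooth_on_cube :: "real \<Rightarrow> (real^'n \<Rightarrow> real^'n) \<Rightarrow> bool" where
  "smooth_on_cube L df \<longleftrightarrow>
     (\<forall>x\<in>unit_cube. \<forall>y\<in>unit_cube. norm (df x - df y) \<le> L * norm (x - y))"

text \<open>Meta-MFW inner iterates within one round: v k is the output of oracle k (k \<ge> 1).\<close>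
primrec mfw_x :: "nat \<Rightarrow> (nat \<Rightarrow> real^'n) \<Rightarrow> nat \<Rightarrow> real^'n" where
  "mfw_x K v 0 = 0"
| "mfw_x K v (Suc k) = mfw_x K v k + (1 / real K) *\<^sub>R had (v (Suc k)) (ones - mfw_x K v k)"

text \<open>Momentum gradient estimates g^(k); G k is the stochastic gradient at x^(k).\<close>
primrec mfw_g :: "(nat \<Rightarrow> real) \<Rightarrow> (nat \<Rightarrow> real^'n) \<Rightarrow> nat \<Rightarrow> real^'n" where
  "mfw_g eta G 0 = 0"
| "mfw_g eta G (Suc k) = (1 - eta (Suc k)) *\<^sub>R mfw_g eta G k + eta (Suc k) *\<^sub>R G (Suc k)"

definition mfw_eta :: "nat \<Rightarrow> real" where
  "mfw_eta k = 2 / (real k + 3) powr (2/3)"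

text \<open>Index of the k-th gradient query of round t (t,k \<ge> 1), in chronological order.\<close>
definition qidx :: "nat \<Rightarrow> nat \<Rightarrow> nat \<Rightarrow> nat" where
  "qidx K t k = (t - 1) * K + (k - 1)"

end

theory Submission
  imports Defs
begin


lemma mem_unit_cube: "x \<in> unit_cube \<longleftrightarrow> (\<forall>i. 0 \<le> x $ i \<and> x $ i \<le> 1)"
  by (simp add: unit_cube_def)

lemma had_nth[simp]: "had a b $ i = a $ i * b $ i"
  by (simp add: had_def)

lemma ones_nth[simp]: "ones $ i = 1"
  by (simp add: ones_def)

lemma inner_cart: "a \<bullet> b = (\<Sum>i\<in>UNIV. a $ i * b $ i)"
  by (simp add: inner_vec_def)

lemma norm_le_cw:
  fixes a b :: "real^'n"
  assumes "\<And>i. \<bar>a $ i\<bar> \<le> \<bar>b $ i\<bar>"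
  shows "norm a \<le> norm b"
proof -
  have "a \<bullet> a \<le> b \<bullet> b"
    unfolding inner_cart
  proof (rule sum_mono)
    fix i
    have "\<bar>a $ i\<bar> * \<bar>a $ i\<bar> \<le> \<bar>b $ i\<bar> * \<bar>b $ i\<bar>" by (rule mult_mono) (use assms[of i] in auto)
    then show "a $ i * a $ i \<le> b $ i * b $ i" by (metis abs_mult_self_eq)
  qed
  then show ?thesis by (simp add: norm_le)
qed

lemma inner_vle_mono:
  fixes a b c :: "real^'n"
  assumes "vle a b" "vle 0 c"
  shows "a \<bullet> c \<le> b \<bullet> c"
  unfolding inner_cart
  using assms by (intro sum_mono) (auto simp: vle_def intro: mult_right_mono)

lemma inner_had: "had a b \<bullet> c = a \<bullet> had b c"
  unfolding inner_cart by (simp add: mult.assoc)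

lemma had_commute: "had a b = had b a"
  by (simp add: had_def mult.commute)

lemma DR_mvt:
  fixes f :: "real^'n \<Rightarrow> real"
  assumes DR: "DR_submodular f df" and p: "p \<in> unit_cube" and q: "q \<in> unit_cube" and pq: "vle p q"
  shows "df q \<bullet> (q - p) \<le> f q - f p" "f q - f p \<le> df p \<bullet> (q - p)"
proof -
  define \<gamma> where "\<gamma> = (\<lambda>s::real. p + s *\<^sub>R (q - p))"
  have \<gamma>cube: "\<gamma> s \<in> unit_cube" if "0 \<le> s" "s \<le> 1" for s
  proof -
    have "0 \<le> p $ i + s * (q $ i - p $ i) \<and> p $ i + s * (q $ i - p $ i) \<le> 1" for i
    proof -
      have a: "p $ i \<le> q $ i" using pq by (simp add: vle_def)
      have "0 \<le> s * (q $ i - p $ i)" using that a by simp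
      moreover have "s * (q $ i - p $ i) \<le> q $ i - p $ i" using that a
        by (simp add: mult_left_le_one_le)
      moreover have "p $ i \<ge> 0" "q $ i \<le> 1" using p q by (auto simp: mem_unit_cube)
      ultimately show ?thesis by linarith
    qed
    then show ?thesis by (simp add: mem_unit_cube \<gamma>_def)
  qed
  have \<gamma>lo: "vle p (\<gamma> s)" "vle (\<gamma> s) q" if "0 \<le> s" "s \<le> 1" for s
  proof -
    have a: "p $ i \<le> q $ i" for i using pq by (simp add: vle_def)
    have *: "0 \<le> s * (q $ i - p $ i)" "s * (q $ i - p $ i) \<le> q $ i - p $ i" for i
      using that a[of i] by (simp_all add: mult_left_le_one_le)
    show "vle p (\<gamma> s)" unfolding vle_def \<gamma>_def using * by simp
    show "vle (\<gamma> s) q" unfolding vle_def \<gamma>_def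
    proof
      fix i show "(p + s *\<^sub>R (q - p)) $ i \<le> q $ i" using *(2)[of i] by simp
    qed
  qed
  have der: "((\<lambda>s. f (\<gamma> s)) has_derivative (\<lambda>h. df (\<gamma> s) \<bullet> (h *\<^sub>R (q - p)))) (at s within {0..1})"
    if "0 \<le> s" "s \<le> 1" for s
  proof -
    have d1: "(\<gamma> has_derivative (\<lambda>h. h *\<^sub>R (q - p))) (at s within {0..1})"
      unfolding \<gamma>_def by (auto intro!: derivative_eq_intros)
    have d2: "\<And>x. x\<in>unit_cube \<Longrightarrow> (f has_derivative (\<lambda>h. df x \<bullet> h)) (at x within unit_cube)"
      using DR by (simp add: DR_submodular_def)
    have "\<gamma> ` {0..1} \<subseteq> unit_cube" using \<gamma>cube by auto
    from has_derivative_in_compose2[OF d2 this _ d1] that show ?thesis by (simp add: \<gamma>_def)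
  qed
  obtain s where s: "s \<in> {0..1}" and eq: "f (\<gamma> 1) - f (\<gamma> 0) = df (\<gamma> s) \<bullet> ((1 - 0) *\<^sub>R (q - p))"
    using mvt_very_simple[of 0 1 "\<lambda>s. f (\<gamma> s)" "\<lambda>s h. df (\<gamma> s) \<bullet> (h *\<^sub>R (q - p))"] der by auto
  have g1: "\<gamma> 1 = q" "\<gamma> 0 = p" by (simp_all add: \<gamma>_def)
  have eq2: "f q - f p = df (\<gamma> s) \<bullet> (q - p)" using eq g1 by simp
  have nn: "vle 0 (q - p)" using pq by (simp add: vle_def)
  have DRm: "\<And>x y. x \<in> unit_cube \<Longrightarrow> y \<in> unit_cube \<Longrightarrow> vle y x \<Longrightarrow> vle (df x) (df y)"
    using DR by (simp add: DR_submodular_def)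
  have "vle (df q) (df (\<gamma> s))" using DRm[OF q \<gamma>cube \<gamma>lo(2)] s by auto
  then show "df q \<bullet> (q - p) \<le> f q - f p" using inner_vle_mono[OF _ nn] eq2 by auto
  have "vle (df (\<gamma> s)) (df p)" using DRm[OF \<gamma>cube p \<gamma>lo(1)] s by auto
  then show "f q - f p \<le> df p \<bullet> (q - p)" using inner_vle_mono[OF _ nn] eq2 by auto
qed


lemma DR_frac:
  fixes f :: "real^'n \<Rightarrow> real"
  assumes DR: "DR_submodular f df" and p: "p \<in> unit_cube" and d: "vle 0 d"
    and pd: "p + d \<in> unit_cube" and th: "0 \<le> \<theta>" "\<theta> \<le> 1"
    and fnn: "\<And>y. y \<in> unit_cube \<Longrightarrow> f y \<ge> 0"
  shows "(1 - \<theta>) * f p \<le> f (p + \<theta> *\<^sub>R d)"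
proof -
  define m where "m = p + \<theta> *\<^sub>R d"
  have di: "0 \<le> d $ i" for i using d by (simp add: vle_def)
  have mi: "p $ i \<le> m $ i \<and> m $ i \<le> (p + d) $ i" for i
    using di[of i] th by (simp add: m_def mult_left_le_one_le)
  have mcube: "m \<in> unit_cube"
    using p pd mi unfolding mem_unit_cube by (meson order_trans)
  have v1: "vle p m" "vle m (p + d)" using mi by (auto simp: vle_def)
  have e1: "df m \<bullet> (m - p) \<le> f m - f p" using DR_mvt(1)[OF DR p mcube v1(1)] .
  have e2: "f (p + d) - f m \<le> df m \<bullet> (p + d - m)" using DR_mvt(2)[OF DR mcube pd v1(2)] .
  have "m - p = \<theta> *\<^sub>R d" by (simp add: m_def)
  then have e1': "\<theta> * (df m \<bullet> d) \<le> f m - f p" using e1 by simp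
  have "p + d - m = (1 - \<theta>) *\<^sub>R d" by (simp add: m_def algebra_simps)
  then have e2': "f (p + d) - f m \<le> (1 - \<theta>) * (df m \<bullet> d)" using e2 by simp
  have "(1 - \<theta>) * (\<theta> * (df m \<bullet> d)) \<le> (1 - \<theta>) * (f m - f p)"
    using e1' th by (intro mult_left_mono) auto
  moreover have "\<theta> * (f (p + d) - f m) \<le> \<theta> * ((1 - \<theta>) * (df m \<bullet> d))"
    using e2' th by (intro mult_left_mono) auto
  moreover have "\<theta> * f (p + d) \<ge> 0" using fnn[OF pd] th by simp
  ultimately have "(1 - \<theta>) * f p \<le> f m"
    by (simp add: algebra_simps)
  then show ?thesis by (simp add: m_def)
qed

lemma mfw_x_Suc_nth: "mfw_x K v (Suc k) $ i = mfw_x K v k $ i + (1 / real K) * (v (Suc k) $ i * (1 - mfw_x K v k $ i))"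
  by simp

lemma mfw_x_bounds:
  assumes K1: "K \<ge> 1" and vcube: "\<And>k. k \<in> {1..K} \<Longrightarrow> v k \<in> unit_cube" and kK: "k \<le> K"
  shows "(1 - 1 / real K) ^ k \<le> 1 - mfw_x K v k $ i \<and> 1 - mfw_x K v k $ i \<le> 1"
  using kK
proof (induction k)
  case 0
  then show ?case by simp
next
  case (Suc k)
  let ?a = "1 - mfw_x K v k $ i" and ?b = "1 - (1 / real K) * v (Suc k) $ i"
  have IH: "(1 - 1 / real K) ^ k \<le> ?a" "?a \<le> 1" using Suc by auto
  have vi: "0 \<le> v (Suc k) $ i" "v (Suc k) $ i \<le> 1" using vcube[of "Suc k"] Suc.prems by (auto simp: mem_unit_cube)
  have rho: "0 \<le> 1 / real K" "1 / real K \<le> 1" using K1 by auto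
  have "(1 / real K) * v (Suc k) $ i \<le> 1 / real K" using vi rho by (intro mult_left_le) auto
  moreover have "0 \<le> (1 / real K) * v (Suc k) $ i" using vi rho by simp
  ultimately have b: "1 - 1 / real K \<le> ?b" "?b \<le> 1" by linarith+
  have eq: "1 - mfw_x K v (Suc k) $ i = ?a * ?b" using K1 by (simp add: field_simps)
  have pk: "0 \<le> (1 - 1 / real K) ^ k" using rho by simp
  have a0: "0 \<le> ?a" using IH pk by linarith
  have "(1 - 1 / real K) ^ Suc k = (1 - 1 / real K) ^ k * (1 - 1 / real K)" by (simp add: mult.commute)
  also have "\<dots> \<le> ?a * ?b" using IH b pk rho a0 by (intro mult_mono) auto
  finally have lo: "(1 - 1 / real K) ^ Suc k \<le> ?a * ?b" .
  have b0: "0 \<le> ?b" using b rho by linarith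
  have "?a * ?b \<le> 1" using IH b b0 by (intro mult_le_one) auto
  then show ?case using lo eq by simp
qed

lemma mfw_x_cube:
  assumes K1: "K \<ge> 1" and vcube: "\<And>k. k \<in> {1..K} \<Longrightarrow> v k \<in> unit_cube" and kK: "k \<le> K"
  shows "mfw_x K v k \<in> unit_cube"
proof -
  have "0 \<le> (1 - 1 / real K) ^ k" using K1 by simp
  moreover have "(1 - 1 / real K) ^ k \<le> 1 - mfw_x K v k $ i \<and> 1 - mfw_x K v k $ i \<le> 1" for i
    using mfw_x_bounds[where K=K and v=v and k=k and i=i] K1 vcube kK by blast
  ultimately have "0 \<le> mfw_x K v k $ i \<and> mfw_x K v k $ i \<le> 1" for i
  proof -
    assume a: "0 \<le> (1 - 1 / real K) ^ k" and b: "\<And>i. (1 - 1 / real K) ^ k \<le> 1 - mfw_x K v k $ i \<and> 1 - mfw_x K v k $ i \<le> 1"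
    from b[of i] have b1: "(1 - 1 / real K) ^ k \<le> 1 - mfw_x K v k $ i" and b2: "1 - mfw_x K v k $ i \<le> 1" by auto
    show ?thesis using a b1 b2 by linarith
  qed
  then show ?thesis unfolding mem_unit_cube by blast
qed

lemma mfw_x_diff:
  "mfw_x K v (Suc k) - mfw_x K v k = (1 / real K) *\<^sub>R had (v (Suc k)) (ones - mfw_x K v k)"
  by simp

lemma mfw_x_step_norm:
  assumes K1: "K \<ge> 1" and vcube: "\<And>k. k \<in> {1..K} \<Longrightarrow> v k \<in> unit_cube" and kK: "Suc k \<le> K"
  shows "norm (mfw_x K v (Suc k) - mfw_x K v k) \<le> (1 / real K) * norm (v (Suc k))"
    "vle (mfw_x K v k) (mfw_x K v (Suc k))"
proof -
  have xc: "mfw_x K v k \<in> unit_cube" using mfw_x_cube[OF K1 vcube] kK by simp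
  have vc: "v (Suc k) \<in> unit_cube" using vcube kK by simp
  have "norm (had (v (Suc k)) (ones - mfw_x K v k)) \<le> norm (v (Suc k))"
  proof (rule norm_le_cw)
    fix i
    have "0 \<le> 1 - mfw_x K v k $ i" "1 - mfw_x K v k $ i \<le> 1" using xc by (auto simp: mem_unit_cube)
    then show "\<bar>had (v (Suc k)) (ones - mfw_x K v k) $ i\<bar> \<le> \<bar>v (Suc k) $ i\<bar>"
      by (simp add: abs_mult mult_left_le)
  qed
  then show "norm (mfw_x K v (Suc k) - mfw_x K v k) \<le> (1 / real K) * norm (v (Suc k))"
    using K1 by (simp add: mfw_x_diff divide_right_mono del: mfw_x.simps)
  show "vle (mfw_x K v k) (mfw_x K v (Suc k))"
    using xc vc by (auto simp: vle_def mem_unit_cube)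
qed


declare mfw_x.simps(2)[simp del]

locale mfw_round =
  fixes f :: "real^'n \<Rightarrow> real" and df :: "real^'n \<Rightarrow> real^'n" and K :: nat
    and v :: "nat \<Rightarrow> real^'n" and xs :: "real^'n" and L r :: real
  assumes K1: "K \<ge> 1" and DR: "DR_submodular f df" and sm: "smooth_on_cube L df"
    and fnn: "\<And>y. y \<in> unit_cube \<Longrightarrow> f y \<ge> 0"
    and vcube: "\<And>k. k \<in> {1..K} \<Longrightarrow> v k \<in> unit_cube"
    and vr: "\<And>k. k \<in> {1..K} \<Longrightarrow> norm (v k) \<le> r"
    and xs: "xs \<in> unit_cube" and xsr: "norm xs \<le> r" and L0: "L \<ge> 0"
begin

abbreviation X where "X k \<equiv> mfw_x K v k"

lemma r0: "r \<ge> 0" using xsr norm_ge_zero order_trans by blast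

lemma Xcube: "k \<le> K \<Longrightarrow> X k \<in> unit_cube"
  by (rule mfw_x_cube[where K=K and v=v]) (use K1 vcube in auto)

lemma rho: "0 < 1 / real K" "1 / real K \<le> 1" using K1 by auto

lemma step_norm: "Suc j \<le> K \<Longrightarrow> norm (X (Suc j) - X j) \<le> (1 / real K) * r"
proof -
  assume a: "Suc j \<le> K"
  have "norm (X (Suc j) - X j) \<le> (1 / real K) * norm (v (Suc j))"
    using mfw_x_step_norm(1)[where K=K and v=v, OF K1 vcube a] .
  also have "\<dots> \<le> (1 / real K) * r" using vr[of "Suc j"] a rho by (intro mult_left_mono) auto
  finally show ?thesis .
qed

lemma smooth_bound: "p \<in> unit_cube \<Longrightarrow> q \<in> unit_cube \<Longrightarrow> norm (df p - df q) \<le> L * norm (p - q)"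
  using sm by (simp add: smooth_on_cube_def)

lemma step_ineq:
  assumes jK: "Suc j \<le> K"
  shows "f (X (Suc j)) \<ge> (1 - 1 / real K) * f (X j) + (1 / real K) * (1 - 1 / real K) ^ j * f xs
          + (1 / real K) * (had (df (X (Suc j))) (ones - X j) \<bullet> (v (Suc j) - xs))
          - L * (1 / real K)^2 * r^2"
proof -
  define \<rho> where "\<rho> = 1 / real K"
  define P where "P = X j"
  define Q where "Q = X (Suc j)"
  have Pc: "P \<in> unit_cube" using Xcube jK by (simp add: P_def)
  have Qc: "Q \<in> unit_cube" using Xcube jK by (simp add: Q_def)
  have PQ: "vle P Q" using mfw_x_step_norm(2)[where K=K and v=v, OF K1 vcube jK] by (simp add: P_def Q_def)
  have QP: "Q - P = \<rho> *\<^sub>R had (v (Suc j)) (ones - P)" by (simp add: P_def Q_def \<rho>_def mfw_x.simps(2))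
  have nQP: "norm (Q - P) \<le> \<rho> * r" using step_norm[OF jK] by (simp add: P_def Q_def \<rho>_def)
  have Pi: "0 \<le> P $ i" "P $ i \<le> 1" for i using Pc by (auto simp: mem_unit_cube)
  have xsi: "0 \<le> xs $ i" "xs $ i \<le> 1" for i using xs by (auto simp: mem_unit_cube)
  define w where "w = had xs (ones - P)"
  define z where "z = P + w"
  have A1: "df Q \<bullet> (Q - P) \<le> f Q - f P" using DR_mvt(1)[OF DR Pc Qc PQ] .
  have A1eq: "df Q \<bullet> (Q - P) = \<rho> * (had (df Q) (ones - P) \<bullet> v (Suc j))"
    unfolding QP inner_cart by (simp add: sum_distrib_left mult_ac)
  have zi: "z $ i = P $ i + xs $ i * (1 - P $ i)" for i by (simp add: z_def w_def)
  have zc: "z \<in> unit_cube"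
  proof -
    have "0 \<le> z $ i \<and> z $ i \<le> 1" for i
    proof -
      have "xs $ i * (1 - P $ i) \<le> 1 - P $ i" using xsi[of i] Pi[of i] by (simp add: mult_left_le_one_le)
      moreover have "0 \<le> xs $ i * (1 - P $ i)" using xsi[of i] Pi[of i] by simp
      ultimately show ?thesis using Pi[of i] zi[of i] by linarith
    qed
    then show ?thesis by (simp add: mem_unit_cube)
  qed
  have Pz: "vle P z" using xsi Pi by (simp add: vle_def zi)
  have A2: "f z - f P \<le> df P \<bullet> w" using DR_mvt(2)[OF DR Pc zc Pz] by (simp add: z_def)
  define \<theta> where "\<theta> = 1 - (1 - \<rho>) ^ j"
  have bnds: "(1 - \<rho>) ^ j \<le> 1 - P $ i" for i
    using mfw_x_bounds[where K=K and v=v and k=j and i=i] K1 vcube jK by (simp add: P_def \<rho>_def)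
  have r01: "0 \<le> 1 - \<rho>" "1 - \<rho> \<le> 1" using rho by (auto simp: \<rho>_def)
  have th0: "0 \<le> \<theta>" using r01 by (simp add: \<theta>_def power_le_one)
  have Pth: "P $ i \<le> \<theta>" for i using bnds[of i] by (simp add: \<theta>_def)
  have B: "(1 - \<rho>) ^ j * f xs \<le> f z"
  proof (cases "\<theta> = 0")
    case True
    then have "P = 0" using Pth Pi by (metis order_antisym vec_eq_iff zero_index)
    then have "z = xs" by (simp add: z_def w_def had_def vec_eq_iff)
    moreover have "(1 - \<rho>) ^ j = 1" using True by (simp add: \<theta>_def)
    ultimately show ?thesis by simp
  next
    case False
    then have thp: "\<theta> > 0" using th0 by simp
    define dd where "dd = (1 / \<theta>) *\<^sub>R had P (ones - xs)"
    have ddi: "dd $ i = P $ i * (1 - xs $ i) / \<theta>" for i by (simp add: dd_def)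
    have d0: "vle 0 dd" using Pi xsi thp by (simp add: vle_def ddi)
    have xdc: "xs + dd \<in> unit_cube"
    proof -
      have "0 \<le> xs $ i + dd $ i \<and> xs $ i + dd $ i \<le> 1" for i
      proof -
        have q1: "P $ i / \<theta> \<le> 1" using Pth[of i] thp by simp
        have "dd $ i = (P $ i / \<theta>) * (1 - xs $ i)" by (simp add: ddi)
        also have "\<dots> \<le> 1 * (1 - xs $ i)" using q1 xsi[of i] by (intro mult_right_mono) auto
        finally have "dd $ i \<le> 1 - xs $ i" by simp
        moreover have "0 \<le> dd $ i" using d0 by (simp add: vle_def)
        ultimately show ?thesis using xsi[of i] by linarith
      qed
      then show ?thesis by (simp add: mem_unit_cube)
    qed
    have th1: "\<theta> \<le> 1" using r01 by (simp add: \<theta>_def)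
    have zeq: "z = xs + \<theta> *\<^sub>R dd"
      using thp by (simp add: vec_eq_iff zi ddi field_simps)
    have "(1 - \<theta>) * f xs \<le> f (xs + \<theta> *\<^sub>R dd)" using DR_frac[OF DR xs d0 xdc th0 th1 fnn] .
    then show ?thesis by (simp add: zeq \<theta>_def)
  qed
  have nw: "norm w \<le> r"
  proof -
    have "norm w \<le> norm xs" unfolding w_def
      by (rule norm_le_cw) (use Pi in \<open>simp add: abs_mult mult_left_le\<close>)
    then show ?thesis using xsr by simp
  qed
  have rp: "\<rho> \<ge> 0" using rho by (simp add: \<rho>_def)
  have S: "df P \<bullet> w \<le> df Q \<bullet> w + L * (\<rho> * r) * r"
  proof -
    have "(df P - df Q) \<bullet> w \<le> norm (df P - df Q) * norm w" by (rule norm_cauchy_schwarz)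
    also have "\<dots> \<le> (L * norm (P - Q)) * norm w"
      using smooth_bound[OF Pc Qc] by (intro mult_right_mono) auto
    also have "\<dots> \<le> (L * (\<rho> * r)) * r"
      using nQP L0 nw r0 rp by (intro mult_mono) (auto simp: norm_minus_commute intro: mult_left_mono)
    finally show ?thesis by (simp add: inner_diff_left)
  qed
  have idw: "had (df Q) (ones - P) \<bullet> xs = df Q \<bullet> w"
    unfolding w_def inner_cart by (simp add: mult_ac)
  have split: "had (df Q) (ones - P) \<bullet> v (Suc j) = had (df Q) (ones - P) \<bullet> (v (Suc j) - xs) + df Q \<bullet> w"
    using idw by (simp add: inner_diff_right)
  have key: "\<rho> * ((1 - \<rho>) ^ j * f xs - f P) \<le> \<rho> * (df Q \<bullet> w + L * (\<rho> * r) * r)"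
    using B A2 S rp by (intro mult_left_mono) auto
  have "f Q \<ge> f P + \<rho> * (had (df Q) (ones - P) \<bullet> (v (Suc j) - xs)) + \<rho> * (df Q \<bullet> w)"
    using A1 A1eq split by (simp add: distrib_left)
  then have "f Q \<ge> (1 - \<rho>) * f P + \<rho> * (1 - \<rho>) ^ j * f xs
          + \<rho> * (had (df Q) (ones - P) \<bullet> (v (Suc j) - xs)) - L * \<rho>^2 * r^2"
    using key by (simp add: algebra_simps power2_eq_square)
  then show ?thesis by (simp add: P_def Q_def \<rho>_def)
qed

end


context mfw_round begin

definition Qk :: "nat \<Rightarrow> real" where
  "Qk k = had (df (X k)) (ones - X (k - 1)) \<bullet> (v k - xs)"

lemma unroll:
  assumes "m \<le> K"
  shows "f (X m) \<ge> (1 - 1 / real K) ^ m * f (X 0) + real m * (1 / real K) * (1 - 1 / real K) ^ (m - 1) * f xs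
           + (\<Sum>k=1..m. (1 - 1 / real K) ^ (m - k) * (1 / real K) * Qk k) - real m * L * (1 / real K)^2 * r^2"
  using assms
proof (induction m)
  case 0
  then show ?case by simp
next
  case (Suc m)
  define c where "c = 1 - 1 / real K"
  define \<rho> where "\<rho> = 1 / real K"
  define a where "a = f xs"
  define E where "E = L * \<rho>^2 * r^2"
  have c01: "0 \<le> c" "c \<le> 1" using rho by (auto simp: c_def)
  have E0: "E \<ge> 0" using L0 by (simp add: E_def)
  have IH: "f (X m) \<ge> c ^ m * f (X 0) + real m * \<rho> * c ^ (m - 1) * a
           + (\<Sum>k=1..m. c ^ (m - k) * \<rho> * Qk k) - real m * E"
    using Suc by (simp add: c_def \<rho>_def a_def E_def)
  have st: "f (X (Suc m)) \<ge> c * f (X m) + \<rho> * c ^ m * a + \<rho> * Qk (Suc m) - E"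
    using step_ineq[OF Suc.prems] by (simp add: c_def \<rho>_def a_def E_def Qk_def)
  have m1: "c * (real m * \<rho> * c ^ (m - 1) * a) = real m * \<rho> * c ^ m * a"
    by (cases m) auto
  have m2: "c * (\<Sum>k=1..m. c ^ (m - k) * \<rho> * Qk k) = (\<Sum>k=1..m. c ^ (Suc m - k) * \<rho> * Qk k)"
    unfolding sum_distrib_left by (rule sum.cong) (auto simp: Suc_diff_le)
  have m3: "(\<Sum>k=1..Suc m. c ^ (Suc m - k) * \<rho> * Qk k) = (\<Sum>k=1..m. c ^ (Suc m - k) * \<rho> * Qk k) + \<rho> * Qk (Suc m)"
    by simp
  have m4: "c * (real m * E) \<le> real m * E" using c01 E0 by (simp add: mult_left_le_one_le)
  have "c * f (X m) \<ge> c * (c ^ m * f (X 0) + real m * \<rho> * c ^ (m - 1) * a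
           + (\<Sum>k=1..m. c ^ (m - k) * \<rho> * Qk k) - real m * E)"
    using IH c01 by (intro mult_left_mono) auto
  also have "c * (c ^ m * f (X 0) + real m * \<rho> * c ^ (m - 1) * a
           + (\<Sum>k=1..m. c ^ (m - k) * \<rho> * Qk k) - real m * E)
      = c ^ Suc m * f (X 0) + c * (real m * \<rho> * c ^ (m - 1) * a)
           + c * (\<Sum>k=1..m. c ^ (m - k) * \<rho> * Qk k) - c * (real m * E)"
    by (simp add: ring_distribs)
  also have "\<dots> = c ^ Suc m * f (X 0) + real m * \<rho> * c ^ m * a
           + (\<Sum>k=1..m. c ^ (Suc m - k) * \<rho> * Qk k) - c * (real m * E)"
    unfolding m1 m2 ..
  finally have "c * f (X m) \<ge> c ^ Suc m * f (X 0) + real m * \<rho> * c ^ m * a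
           + (\<Sum>k=1..m. c ^ (Suc m - k) * \<rho> * Qk k) - c * (real m * E)" .
  then have "f (X (Suc m)) \<ge> c ^ Suc m * f (X 0) + real (Suc m) * \<rho> * c ^ (Suc m - 1) * a
           + (\<Sum>k=1..Suc m. c ^ (Suc m - k) * \<rho> * Qk k) - real (Suc m) * E"
    using st m3 m4 by (simp add: ring_distribs)
  then show ?case by (simp add: c_def \<rho>_def a_def E_def)
qed

end


context mfw_round begin

abbreviation Hg where "Hg k \<equiv> mfw_g mfw_eta (\<lambda>j. df (X j)) k"
definition ek where "ek k = df (X k) - Hg k"
definition Hk where "Hk k = had (Hg k) (ones - X k) \<bullet> (v k - xs)"

lemma norm_v_xs: "k \<in> {1..K} \<Longrightarrow> norm (v k - xs) \<le> sqrt 2 * r"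
proof -
  assume k: "k \<in> {1..K}"
  have vi: "0 \<le> v k $ i" "v k $ i \<le> 1" for i using vcube[OF k] by (auto simp: mem_unit_cube)
  have xsi: "0 \<le> xs $ i" "xs $ i \<le> 1" for i using xs by (auto simp: mem_unit_cube)
  have "(v k - xs) \<bullet> (v k - xs) \<le> v k \<bullet> v k + xs \<bullet> xs"
    unfolding inner_cart sum.distrib[symmetric]
  proof (rule sum_mono)
    fix i
    have "(v k $ i - xs $ i) * (v k $ i - xs $ i) = v k $ i * v k $ i + xs $ i * xs $ i - 2 * (v k $ i * xs $ i)"
      by (simp add: algebra_simps)
    moreover have "0 \<le> v k $ i * xs $ i" using vi xsi by simp
    ultimately show "(v k - xs) $ i * (v k - xs) $ i \<le> v k $ i * v k $ i + xs $ i * xs $ i" by simp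
  qed
  also have "\<dots> = (norm (v k))^2 + (norm xs)^2" by (simp add: power2_norm_eq_inner)
  also have "\<dots> \<le> r^2 + r^2" using vr[OF k] xsr by (intro add_mono power_mono) auto
  finally have "(norm (v k - xs))^2 \<le> (sqrt 2 * r)^2" by (simp add: power2_norm_eq_inner power_mult_distrib)
  then show ?thesis by (rule power2_le_imp_le) (use r0 in simp)
qed

lemma Qk_lower:
  assumes k: "k \<in> {1..K}"
  shows "Qk k \<ge> Hk k - sqrt 2 * r * norm (ek k) - (1 / real K) * r * norm (df (X k))"
proof -
  obtain j where kj: "k = Suc j" using k by (cases k) auto
  have jK: "Suc j \<le> K" using k kj by simp
  define P where "P = X j"
  define Q where "Q = X k"
  define d where "d = Q - P"
  have Pc: "P \<in> unit_cube" using Xcube jK by (simp add: P_def)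
  have Qc: "Q \<in> unit_cube" using Xcube k by (simp add: Q_def)
  have nd: "norm d \<le> (1 / real K) * r" using step_norm[OF jK] by (simp add: d_def P_def Q_def kj)
  have vi: "0 \<le> v k $ i" "v k $ i \<le> 1" for i using vcube[OF k] by (auto simp: mem_unit_cube)
  have xsi: "0 \<le> xs $ i" "xs $ i \<le> 1" for i using xs by (auto simp: mem_unit_cube)
  have Qi: "0 \<le> Q $ i" "Q $ i \<le> 1" for i using Qc by (auto simp: mem_unit_cube)
  have vxi: "\<bar>(v k - xs) $ i\<bar> \<le> 1" for i using vi[of i] xsi[of i] by auto
  have V: "had (df (X k)) (ones - X (k - 1)) = had (Hg k) (ones - Q) + had (ek k) (ones - Q) + had (df Q) d"
    unfolding vec_eq_iff by (simp add: ek_def d_def P_def Q_def kj algebra_simps)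
  have decomp: "Qk k = Hk k + ek k \<bullet> had (ones - Q) (v k - xs) + df Q \<bullet> had d (v k - xs)"
    unfolding Qk_def Hk_def V inner_add_left inner_had by (simp add: Q_def)
  have n1: "norm (had (ones - Q) (v k - xs)) \<le> sqrt 2 * r"
  proof -
    have "norm (had (ones - Q) (v k - xs)) \<le> norm (v k - xs)"
      by (rule norm_le_cw) (use Qi in \<open>simp add: abs_mult mult_left_le_one_le\<close>)
    then show ?thesis using norm_v_xs[OF k] by simp
  qed
  have n2: "norm (had d (v k - xs)) \<le> (1 / real K) * r"
  proof -
    have "norm (had d (v k - xs)) \<le> norm d"
      by (rule norm_le_cw) (use vxi in \<open>simp add: abs_mult mult_left_le\<close>)
    then show ?thesis using nd by simp
  qed
  have t1: "ek k \<bullet> had (ones - Q) (v k - xs) \<ge> - (sqrt 2 * r * norm (ek k))"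
  proof -
    have "\<bar>ek k \<bullet> had (ones - Q) (v k - xs)\<bar> \<le> norm (ek k) * norm (had (ones - Q) (v k - xs))"
      by (rule Cauchy_Schwarz_ineq2)
    also have "\<dots> \<le> norm (ek k) * (sqrt 2 * r)" using n1 by (intro mult_left_mono) auto
    finally show ?thesis by (simp add: mult_ac)
  qed
  have t2: "df Q \<bullet> had d (v k - xs) \<ge> - ((1 / real K) * r * norm (df (X k)))"
  proof -
    have "\<bar>df Q \<bullet> had d (v k - xs)\<bar> \<le> norm (df Q) * norm (had d (v k - xs))"
      by (rule Cauchy_Schwarz_ineq2)
    also have "\<dots> \<le> norm (df Q) * ((1 / real K) * r)" using n2 by (intro mult_left_mono) auto
    finally show ?thesis by (simp add: mult_ac Q_def)
  qed
  show ?thesis using decomp t1 t2 by linarith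
qed

end


lemma eta_pos: "mfw_eta k > 0"
  by (simp add: mfw_eta_def)

lemma eta_anti: "j \<le> k \<Longrightarrow> mfw_eta k \<le> mfw_eta j"
  unfolding mfw_eta_def
  by (intro divide_left_mono powr_mono2) auto

lemma four_powr: "4 powr (2/3::real) \<ge> 2"
proof -
  have "(4::real) powr (1/2) \<le> 4 powr (2/3)" by (intro powr_mono) auto
  moreover have "(4::real) powr (1/2) = 2" by (simp add: powr_half_sqrt)
  ultimately show ?thesis by simp
qed

lemma eta_le1: "k \<ge> 1 \<Longrightarrow> mfw_eta k \<le> 1"
proof -
  assume "k \<ge> 1"
  then have "mfw_eta k \<le> mfw_eta 1" by (rule eta_anti)
  also have "mfw_eta 1 = 2 / 4 powr (2/3)" by (simp add: mfw_eta_def)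
  also have "\<dots> \<le> 1" using four_powr by simp
  finally show ?thesis .
qed

lemma geo_sum_bound:
  fixes u :: "nat \<Rightarrow> real"
  assumes K1: "K \<ge> 1" and u0: "\<And>k. u k \<ge> 0" and e: "0 \<le> \<eta>" "\<eta> \<le> 1" and c: "c \<ge> 0"
    and rec: "\<And>k. 2 \<le> k \<Longrightarrow> k \<le> K \<Longrightarrow> u k \<le> (1 - \<eta>) * u (k - 1) + c"
  shows "\<eta> * (\<Sum>k=1..K. u k) \<le> u 1 + real (K - 1) * c"
proof -
  have claim: "\<eta> * (\<Sum>k=1..<m. u k) + u m \<le> u 1 + real (m - 1) * c" if "1 \<le> m" "m \<le> K" for m
    using that
  proof (induction m rule: dec_induct)
    case base
    then show ?case by simp
  next
    case (step n)
    have r: "u (Suc n) \<le> (1 - \<eta>) * u n + c" using rec[of "Suc n"] step by simp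
    have "\<eta> * (\<Sum>k=1..<Suc n. u k) + u (Suc n) = \<eta> * (\<Sum>k=1..<n. u k) + \<eta> * u n + u (Suc n)"
      using step by (simp add: distrib_left)
    also have "\<dots> \<le> \<eta> * (\<Sum>k=1..<n. u k) + u n + c" using r by (simp add: algebra_simps)
    also have "\<dots> \<le> u 1 + real (n - 1) * c + c" using step by simp
    also have "\<dots> = u 1 + real (Suc n - 1) * c" using step by (simp add: algebra_simps of_nat_diff)
    finally show ?case .
  qed
  have "\<eta> * (\<Sum>k=1..K. u k) = \<eta> * (\<Sum>k=1..<K. u k) + \<eta> * u K"
    using K1 by (simp add: atLeastLessThanSuc_atLeastAtMost[symmetric] distrib_left)
  also have "\<dots> \<le> \<eta> * (\<Sum>k=1..<K. u k) + u K" using e u0[of K] by (simp add: mult_left_le_one_le)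
  also have "\<dots> \<le> u 1 + real (K - 1) * c" using claim[of K] K1 by simp
  finally show ?thesis .
qed

context mfw_round begin

lemma X_dist1: "1 \<le> k \<Longrightarrow> k \<le> K \<Longrightarrow> norm (X k - X 1) \<le> real (k - 1) * ((1 / real K) * r)"
proof (induction k rule: dec_induct)
  case base
  then show ?case by simp
next
  case (step n)
  have "X (Suc n) - X 1 = (X (Suc n) - X n) + (X n - X 1)" by simp
  then have "norm (X (Suc n) - X 1) \<le> norm (X (Suc n) - X n) + norm (X n - X 1)"
    by (metis norm_triangle_ineq)
  also have "\<dots> \<le> (1 / real K) * r + real (n - 1) * ((1 / real K) * r)"
    using step_norm[of n] step by (intro add_mono) auto
  also have "\<dots> = real (Suc n - 1) * ((1 / real K) * r)" using step K1 by (simp add: of_nat_diff field_simps)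
  finally show ?case .
qed

lemma grad_bound: "k \<in> {1..K} \<Longrightarrow> norm (df (X k)) \<le> norm (df (X 1)) + L * r"
proof -
  assume k: "k \<in> {1..K}"
  have "norm (df (X k) - df (X 1)) \<le> L * norm (X k - X 1)"
    using smooth_bound[OF Xcube Xcube, of k 1] k K1 by simp
  also have "\<dots> \<le> L * (real (k - 1) * ((1 / real K) * r))"
    using X_dist1 k L0 by (intro mult_left_mono) auto
  also have "real (k - 1) * ((1 / real K) * r) \<le> r"
  proof -
    have "real (k - 1) * (1 / real K) \<le> 1" using k by (simp add: field_simps)
    moreover have "0 \<le> real (k - 1) * (1 / real K)" by simp
    ultimately have "(real (k - 1) * (1 / real K)) * r \<le> 1 * r" using r0 by (intro mult_right_mono) auto
    then show ?thesis by (simp add: mult.assoc)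
  qed
  then have "L * (real (k - 1) * ((1 / real K) * r)) \<le> L * r" using L0 by (intro mult_left_mono) auto
  finally have "norm (df (X k) - df (X 1)) \<le> L * r" by simp
  then show ?thesis using norm_triangle_sub[of "df (X k)" "df (X 1)"] by simp
qed

lemma ek1: "norm (ek 1) = (1 - mfw_eta 1) * norm (df (X 1))"
proof -
  have "ek 1 = (1 - mfw_eta 1) *\<^sub>R df (X 1)" by (simp add: ek_def algebra_simps)
  then show ?thesis using eta_le1[of 1] by simp
qed

lemma ek_rec:
  assumes "Suc j \<le> K"
  shows "norm (ek (Suc j)) \<le> (1 - mfw_eta (Suc j)) * (norm (ek j) + L * ((1 / real K) * r))"
proof -
  have eq: "ek (Suc j) = (1 - mfw_eta (Suc j)) *\<^sub>R (ek j + (df (X (Suc j)) - df (X j)))"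
    by (simp add: ek_def algebra_simps)
  have e1: "0 \<le> 1 - mfw_eta (Suc j)" using eta_le1[of "Suc j"] by simp
  have "norm (df (X (Suc j)) - df (X j)) \<le> L * norm (X (Suc j) - X j)"
    using smooth_bound[OF Xcube Xcube, of "Suc j" j] assms by simp
  also have "\<dots> \<le> L * ((1 / real K) * r)" using step_norm[OF assms] L0 by (intro mult_left_mono) auto
  finally have d: "norm (df (X (Suc j)) - df (X j)) \<le> L * ((1 / real K) * r)" .
  have "norm (ek (Suc j)) = (1 - mfw_eta (Suc j)) * norm (ek j + (df (X (Suc j)) - df (X j)))"
    using e1 by (simp add: eq)
  also have "\<dots> \<le> (1 - mfw_eta (Suc j)) * (norm (ek j) + L * ((1 / real K) * r))"
    using e1 d norm_triangle_ineq[of "ek j" "df (X (Suc j)) - df (X j)"] by (intro mult_left_mono) auto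
  finally show ?thesis .
qed

lemma ek_sum:
  "mfw_eta K * (\<Sum>k=1..K. norm (ek k)) \<le> (1 - mfw_eta 1) * norm (df (X 1)) + real (K - 1) * (L * ((1 / real K) * r))"
proof -
  have c0: "0 \<le> L * ((1 / real K) * r)" using L0 r0 rho by simp
  have "mfw_eta K * (\<Sum>k=1..K. norm (ek k)) \<le> norm (ek 1) + real (K - 1) * (L * ((1 / real K) * r))"
  proof (rule geo_sum_bound[OF K1])
    show "0 \<le> mfw_eta K" using eta_pos[of K] by simp
    show "mfw_eta K \<le> 1" using eta_le1 K1 by simp
    show "0 \<le> L * ((1 / real K) * r)" by (rule c0)
    fix k assume k: "2 \<le> k" "k \<le> K"
    then obtain j where kj: "k = Suc j" by (cases k) auto
    have "norm (ek k) \<le> (1 - mfw_eta k) * (norm (ek j) + L * ((1 / real K) * r))"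
      using ek_rec[of j] k kj by simp
    also have "\<dots> \<le> (1 - mfw_eta K) * (norm (ek j) + L * ((1 / real K) * r))"
      using eta_anti[of k K] k c0 by (intro mult_right_mono) auto
    also have "\<dots> \<le> (1 - mfw_eta K) * norm (ek j) + L * ((1 / real K) * r)"
    proof -
      have "(1 - mfw_eta K) * (L * ((1 / real K) * r)) \<le> L * ((1 / real K) * r)"
        using eta_pos[of K] c0 eta_le1[of K] K1 by (intro mult_left_le_one_le) auto
      then show ?thesis by (simp add: distrib_left)
    qed
    finally show "norm (ek k) \<le> (1 - mfw_eta K) * norm (ek (k - 1)) + L * ((1 / real K) * r)"
      using kj by simp
  qed simp
  then show ?thesis using ek1 by simp
qed

end


lemma quad_ok:
  fixes s \<beta> :: real
  assumes "0 \<le> \<beta>" "\<beta> \<le> 1.7"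
  shows "\<beta> * s \<le> (3 * s^2 + 1) / 2"
proof -
  have eq: "(3 * s^2 + 1) / 2 - \<beta> * s = 3/2 * (s - \<beta>/3)^2 + (1/2 - \<beta>^2/6)"
    by (simp add: power2_eq_square field_simps)
  have "\<beta>^2 \<le> 1.7^2" using assms by (intro power_mono) auto
  then have "\<beta>^2 \<le> 2.89" by (simp add: power2_eq_square)
  then have "0 \<le> 1/2 - \<beta>^2/6" by simp
  moreover have "0 \<le> 3/2 * (s - \<beta>/3)^2" by simp
  ultimately show ?thesis using eq by linarith
qed

lemma num_core1:
  fixes G p s a w M :: real
  assumes "G \<ge> 0" "p \<ge> 0" "1.587 * G \<le> s" "2.449 * p \<le> s"
    "0 \<le> a" "a \<le> 0.207" "0 \<le> w" "w \<le> 0.7072" "0 \<le> M" "M \<le> 2.5202"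
  shows "w * M * (a * G) + G + 1.5 * p \<le> (3 * s^2 + 1) / 2"
proof -
  have h1: "w * M \<le> 0.7072 * 2.5202" using assms by (intro mult_mono) auto
  have h2: "(w * M) * a \<le> (0.7072 * 2.5202) * 0.207" using assms h1 by (intro mult_mono) auto
  have h3: "(w * M * a) * G \<le> 0.369 * G" using h2 assms by (intro mult_right_mono) auto
  have "w * M * (a * G) + G + 1.5 * p \<le> 1.48 * s" using h3 assms by (simp add: mult.assoc)
  also have "\<dots> \<le> (3 * s^2 + 1) / 2" by (rule quad_ok) auto
  finally show ?thesis .
qed

lemma num_core2:
  fixes G p s a w R c2 t :: real
  assumes "G \<ge> 0" "p \<ge> 0" "1.587 * G \<le> s" "2.449 * p \<le> s"
    "0 \<le> a" "a \<le> 0.207" "0 \<le> w" "w \<le> 0.7072" "0 \<le> R" "R \<le> 1.85 * c2" "c2 \<ge> 1.587"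
    "0 \<le> t" "t \<le> 1"
  shows "w * R * (a * G + t * p) + G + 1.5 * p \<le> (3 * s^2 + 1) / 2 * c2"
proof -
  have c0: "c2 \<ge> 0" using assms by simp
  have h1: "w * R \<le> 0.7072 * (1.85 * c2)" using assms c0 by (intro mult_mono) auto
  have ag: "a * G \<le> 0.207 * G" using assms by (intro mult_right_mono) auto
  have tp: "t * p \<le> p" using assms by (simp add: mult_left_le_one_le)
  have h2: "(w * R) * (a * G + t * p) \<le> (0.7072 * (1.85 * c2)) * (0.207 * G + p)"
    using h1 ag tp assms by (intro mult_mono) auto
  have h3: "G + 1.5 * p \<le> (0.6302 * c2) * (G + 1.5 * p)"
  proof -
    have "1 \<le> 0.6302 * c2" using assms by simp
    moreover have "0 \<le> G + 1.5 * p" using assms by simp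
    ultimately have "1 * (G + 1.5 * p) \<le> (0.6302 * c2) * (G + 1.5 * p)" by (intro mult_right_mono)
    then show ?thesis by simp
  qed
  have "w * R * (a * G + t * p) + G + 1.5 * p \<le> (0.7072 * (1.85 * c2)) * (0.207 * G + p) + (0.6302 * c2) * (G + 1.5 * p)"
    using h2 h3 by linarith
  also have "\<dots> = c2 * (0.90102224 * G + 2.25362 * p)" by (simp add: field_simps)
  also have "\<dots> \<le> c2 * (1.49 * s)" using assms c0 by (intro mult_left_mono) auto
  also have "\<dots> \<le> c2 * ((3 * s^2 + 1) / 2)" using c0 by (intro mult_left_mono quad_ok) auto
  finally show ?thesis by (simp add: mult.commute)
qed

lemma powr23_le:
  fixes x y :: real
  assumes "0 < x" "0 \<le> y" "x^2 \<le> y^3"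
  shows "x powr (2/3) \<le> y"
proof (rule ccontr)
  assume "\<not> x powr (2/3) \<le> y"
  then have "y < x powr (2/3)" by simp
  then have "y^3 < (x powr (2/3))^3" using assms by (intro power_strict_mono) auto
  also have "(x powr (2/3))^3 = x^2"
  proof -
    have "(x powr (2/3))^3 = (x powr (2/3)) powr (3::real)"
      using assms by (subst powr_numeral) auto
    also have "\<dots> = x powr (2::real)" by (simp add: powr_powr)
    also have "\<dots> = x^2" using assms by (subst powr_numeral) auto
    finally show ?thesis .
  qed
  finally show False using assms by simp
qed

lemma powr23_ge:
  fixes x y :: real
  assumes "0 < x" "0 \<le> y" "y^3 \<le> x^2"
  shows "y \<le> x powr (2/3)"
proof (rule ccontr)
  assume "\<not> y \<le> x powr (2/3)"
  then have "x powr (2/3) < y" by simp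
  then have "(x powr (2/3))^3 < y^3" by (intro power_strict_mono) auto
  also have "(x powr (2/3))^3 = x^2"
  proof -
    have "(x powr (2/3))^3 = (x powr (2/3)) powr (3::real)"
      using assms by (subst powr_numeral) auto
    also have "\<dots> = x powr (2::real)" by (simp add: powr_powr)
    also have "\<dots> = x^2" using assms by (subst powr_numeral) auto
    finally show ?thesis .
  qed
  finally show False using assms by simp
qed


lemma num_main:
  fixes K :: nat and G L r N :: real
  assumes K1: "K \<ge> 1" and G0: "G \<ge> 0" and L0: "L \<ge> 0" and r0: "r \<ge> 0"
    and NG: "4 powr (2/3) * G^2 \<le> N" and NL: "6 * (L*r)^2 \<le> N"
  shows "(1/real K) * (sqrt 2 * r * (((1 - mfw_eta 1) * G + real (K-1) * (L*((1/real K)*r))) / mfw_eta K))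
          + (1/real K) * (r * (G + L*r)) + L * (1/real K) * r^2
        \<le> L * r^2 / (2 * real K) + r / 2 * (3 * N + 1) / real K powr (1/3)"
proof -
  define p where "p = L * r"
  define s where "s = sqrt N"
  define a where "a = 1 - mfw_eta 1"
  define w where "w = sqrt 2 / 2"
  define R where "R = (real K + 3) powr (2/3)"
  define c where "c = real K powr (1/3)"
  define c2 where "c2 = real K powr (2/3)"
  define t where "t = real (K - 1) * (1 / real K)"
  have Kp: "real K > 0" using K1 by simp
  have p0: "p \<ge> 0" using L0 r0 by (simp add: p_def)
  have N0: "N \<ge> 0"
  proof -
    have "0 \<le> 6 * (L*r)^2" by simp
    then show ?thesis using NL by linarith
  qed
  have s0: "s \<ge> 0" using N0 by (simp add: s_def)
  have ss: "s^2 = N" using N0 by (simp add: s_def)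
  have q1: "2.5186 \<le> (4::real) powr (2/3)" by (rule powr23_ge) (simp_all add: power_divide)
  have q2: "(4::real) powr (2/3) \<le> 2.5202" by (rule powr23_le) (simp_all add: power_divide)
  have a0: "0 \<le> a" using eta_le1[of 1] by (simp add: a_def)
  have a1: "a \<le> 0.207"
  proof -
    have "2 / 2.5202 \<le> 2 / (4::real) powr (2/3)" using q2 q1 by (intro divide_left_mono) auto
    then show ?thesis by (simp add: a_def mfw_eta_def)
  qed
  have Gs: "1.587 * G \<le> s"
  proof -
    have "(1.587 * G)^2 \<le> 2.5186 * G^2" by (simp add: power_mult_distrib power_divide)
    also have "\<dots> \<le> 4 powr (2/3) * G^2" using q1 by (intro mult_right_mono) auto
    also have "\<dots> \<le> s^2" using NG ss by simp
    finally show ?thesis using s0 by (rule power2_le_imp_le)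
  qed
  have ps: "2.449 * p \<le> s"
  proof -
    have "(2.449 * p)^2 \<le> 6 * p^2" by (simp add: power_mult_distrib power_divide)
    also have "\<dots> \<le> s^2" using NL ss by (simp add: p_def)
    finally show ?thesis using s0 by (rule power2_le_imp_le)
  qed
  have w0: "0 \<le> w" by (simp add: w_def)
  have w1: "w \<le> 0.7072"
  proof -
    have "sqrt 2 \<le> sqrt (1.4144^2)" by (rule real_sqrt_le_mono) (simp add: power2_eq_square)
    then show ?thesis by (simp add: w_def)
  qed
  have R0: "R > 0" by (simp add: R_def)
  have eta: "mfw_eta K = 2 / R" by (simp add: mfw_eta_def R_def)
  have cc: "real K = c * c2"
  proof -
    have "c * c2 = real K powr (1/3 + 2/3)" by (simp only: c_def c2_def powr_add)
    also have "\<dots> = real K" using Kp by simp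
    finally show ?thesis by simp
  qed
  have cp: "c > 0" using Kp by (simp add: c_def)
  have c2p: "c2 > 0" using Kp by (simp add: c2_def)
  define X where "X = w * R * (a * G + t * p) + G + 1.5 * p"
  have lhs: "(1/real K) * (sqrt 2 * r * (((1 - mfw_eta 1) * G + real (K-1) * (L*((1/real K)*r))) / mfw_eta K))
          + (1/real K) * (r * (G + L*r)) + L * (1/real K) * r^2 = r * (1 / real K) * X + L * r^2 / (2 * real K)"
    using Kp R0 by (simp add: X_def eta w_def a_def t_def p_def field_simps power2_eq_square)
  have rhs: "r / 2 * (3 * N + 1) / real K powr (1/3) = r * (1 / real K) * (c2 * ((3 * s^2 + 1) / 2))"
  proof -
    have "r / 2 * (3 * N + 1) / real K powr (1/3) = r / 2 * (3 * N + 1) / c" by (simp add: c_def)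
    also have "\<dots> = r * (1 / (c * c2)) * (c2 * ((3 * s^2 + 1) / 2))" using cp c2p by (simp add: ss field_simps)
    also have "\<dots> = r * (1 / real K) * (c2 * ((3 * s^2 + 1) / 2))" by (simp only: cc)
    finally show ?thesis .
  qed
  have t0: "0 \<le> t" by (simp add: t_def)
  have t1: "t \<le> 1" using K1 by (simp add: t_def field_simps)
  have core: "X \<le> c2 * ((3 * s^2 + 1) / 2)"
  proof (cases "K = 1")
    case True
    then have "c2 = 1" "t = 0" "R = 4 powr (2/3)" by (simp_all add: c2_def t_def R_def)
    then show ?thesis using num_core1[OF G0 p0 Gs ps a0 a1 w0 w1, of R] R0 q2 by (simp add: X_def mult.assoc)
  next
    case False
    then have K2: "K \<ge> 2" using K1 by simp
    have c2b: "c2 \<ge> 1.587"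
    proof -
      have "(1.587::real)^3 \<le> (real K)^2"
      proof -
        have "(2::real)^2 \<le> (real K)^2" using K2 by (intro power_mono) auto
        moreover have "(1.587::real)^3 \<le> 4" by (simp add: power_divide)
        ultimately show ?thesis by simp
      qed
      then show ?thesis unfolding c2_def using Kp by (intro powr23_ge) auto
    qed
    have Rb: "R \<le> 1.85 * c2"
    proof -
      have "R / c2 = ((real K + 3) / real K) powr (2/3)" using Kp by (simp add: R_def c2_def powr_divide)
      also have "\<dots> \<le> 1.85"
      proof (rule powr23_le)
        show "0 < (real K + 3) / real K" using Kp by simp
        have "(real K + 3) / real K \<le> 2.5" using K2 Kp by (simp add: field_simps)
        moreover have "0 \<le> (real K + 3) / real K" using Kp by simp
        ultimately have "((real K + 3) / real K)^2 \<le> 2.5^2" by (intro power_mono) auto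
        moreover have "(2.5::real)^2 \<le> 1.85^3" by (simp add: power_divide)
        ultimately show "((real K + 3) / real K)^2 \<le> 1.85^3" by linarith
      qed auto
      finally show ?thesis using c2p by (simp add: divide_le_eq)
    qed
    show ?thesis using num_core2[OF G0 p0 Gs ps a0 a1 w0 w1 _ Rb c2b t0 t1] R0 by (simp add: X_def mult.commute)
  qed
  have "r * (1 / real K) * X \<le> r * (1 / real K) * (c2 * ((3 * s^2 + 1) / 2))"
    using core r0 Kp by (intro mult_left_mono) auto
  then show ?thesis using lhs rhs by simp
qed


lemma one_minus_pow_ge:
  assumes K1: "K \<ge> (1::nat)"
  shows "exp (-1) \<le> (1 - 1 / real K) ^ (K - 1)"
proof (cases "K = 1")
  case True
  then show ?thesis by simp
next
  case False
  define m where "m = K - 1"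
  have m1: "m \<ge> 1" using K1 False by (simp add: m_def)
  have mp: "real m > 0" using m1 by simp
  have "(1 + 1 / real m) ^ m \<le> exp (1 / real m) ^ m"
    by (intro power_mono) (auto simp: exp_ge_add_one_self add_nonneg_nonneg)
  also have "\<dots> = exp 1" using mp by (simp add: exp_of_nat_mult[symmetric])
  finally have A: "(1 + 1 / real m) ^ m \<le> exp 1" .
  have eq: "1 - 1 / real K = 1 / (1 + 1 / real m)"
    using m1 K1 by (simp add: m_def of_nat_diff field_simps)
  have "0 < 1 + 1 / real m" using mp by (simp add: add_pos_pos)
  then have pos: "0 < (1 + 1 / real m) ^ m" by (rule zero_less_power)
  have "exp (-1::real) = 1 / exp 1" by (simp add: exp_minus inverse_eq_divide)
  also have "\<dots> \<le> 1 / (1 + 1 / real m) ^ m" using A pos by (intro divide_left_mono) auto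
  also have "\<dots> = (1 - 1 / real K) ^ (K - 1)" by (simp add: eq m_def power_one_over)
  finally show ?thesis .
qed

context mfw_round begin

lemma round_bound:
  assumes NG: "4 powr (2/3) * (norm (df (X 1)))^2 \<le> N" and NL: "6 * (L * r)^2 \<le> N"
  shows "f xs / exp 1 - f (X K) \<le> (\<Sum>k=1..K. (1 / real K) * (1 - 1 / real K) ^ (K - k) * (had (Hg k) (ones - X k) \<bullet> (xs - v k)))
           + (L * r^2 / (2 * real K) + r / 2 * (3 * N + 1) / real K powr (1/3))"
proof -
  define \<rho> where "\<rho> = 1 / real K"
  define c where "c = 1 - 1 / real K"
  define a where "a = f xs"
  define G where "G = norm (df (X 1))"
  define err where "err k = sqrt 2 * r * norm (ek k) + \<rho> * r * norm (df (X k))" for k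
  have Kp: "real K > 0" using K1 by simp
  have rp: "0 < \<rho>" "\<rho> \<le> 1" using rho by (auto simp: \<rho>_def)
  have c01: "0 \<le> c" "c \<le> 1" using rho by (auto simp: c_def)
  have a0: "a \<ge> 0" using fnn[OF xs] by (simp add: a_def)
  have X0: "f (X 0) \<ge> 0" using fnn Xcube[of 0] by simp
  have err0: "err k \<ge> 0" for k using r0 rp by (simp add: err_def)
  have U: "f (X K) \<ge> c ^ K * f (X 0) + real K * \<rho> * c ^ (K - 1) * a
           + (\<Sum>k=1..K. c ^ (K - k) * \<rho> * Qk k) - real K * L * \<rho>^2 * r^2"
    using unroll[of K] by (simp add: c_def \<rho>_def a_def)
  have Krho: "real K * \<rho> = 1" using Kp by (simp add: \<rho>_def)
  have KL: "real K * L * \<rho>^2 * r^2 = L * \<rho> * r^2" using Kp by (simp add: \<rho>_def power2_eq_square)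
  have S1: "(\<Sum>k=1..K. c ^ (K - k) * \<rho> * Qk k) \<ge> (\<Sum>k=1..K. c ^ (K - k) * \<rho> * Hk k) - (\<Sum>k=1..K. \<rho> * err k)"
  proof -
    have "(\<Sum>k=1..K. c ^ (K - k) * \<rho> * Hk k - \<rho> * err k) \<le> (\<Sum>k=1..K. c ^ (K - k) * \<rho> * Qk k)"
    proof (rule sum_mono)
      fix k assume k: "k \<in> {1..K}"
      have w0: "0 \<le> c ^ (K - k) * \<rho>" using c01 rp by simp
      have w1: "c ^ (K - k) * \<rho> \<le> \<rho>" using c01 rp by (simp add: power_le_one mult_left_le_one_le)
      have "c ^ (K - k) * \<rho> * (Hk k - err k) \<le> c ^ (K - k) * \<rho> * Qk k"
        using Qk_lower[OF k] w0 by (intro mult_left_mono) (auto simp: err_def \<rho>_def)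
      moreover have "c ^ (K - k) * \<rho> * err k \<le> \<rho> * err k" using w1 err0[of k] by (intro mult_right_mono) auto
      ultimately show "c ^ (K - k) * \<rho> * Hk k - \<rho> * err k \<le> c ^ (K - k) * \<rho> * Qk k"
        by (simp add: right_diff_distrib)
    qed
    then show ?thesis by (simp add: sum_subtractf)
  qed
  have S2: "(\<Sum>k=1..K. c ^ (K - k) * \<rho> * Hk k) = - (\<Sum>k=1..K. \<rho> * c ^ (K - k) * (had (Hg k) (ones - X k) \<bullet> (xs - v k)))"
    unfolding sum_negf[symmetric]
    by (rule sum.cong) (auto simp: Hk_def inner_diff_right algebra_simps)
  have eK: "mfw_eta K > 0" by (rule eta_pos)
  have Se: "(\<Sum>k=1..K. norm (ek k)) \<le> ((1 - mfw_eta 1) * G + real (K - 1) * (L * ((1 / real K) * r))) / mfw_eta K"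
    using ek_sum eK by (simp add: G_def pos_le_divide_eq mult.commute)
  have Sg: "(\<Sum>k=1..K. norm (df (X k))) \<le> real K * (G + L * r)"
  proof -
    have "(\<Sum>k=1..K. norm (df (X k))) \<le> (\<Sum>k=1..K. G + L * r)"
      by (rule sum_mono) (use grad_bound in \<open>auto simp: G_def\<close>)
    then show ?thesis by simp
  qed
  have S3: "(\<Sum>k=1..K. \<rho> * err k) \<le> (1/real K) * (sqrt 2 * r * (((1 - mfw_eta 1) * G + real (K-1) * (L*((1/real K)*r))) / mfw_eta K))
          + (1/real K) * (r * (G + L*r))"
  proof -
    have "(\<Sum>k=1..K. \<rho> * err k) = \<rho> * (sqrt 2 * r) * (\<Sum>k=1..K. norm (ek k)) + \<rho> * (\<rho> * r) * (\<Sum>k=1..K. norm (df (X k)))"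
      by (simp add: err_def sum.distrib sum_distrib_left mult_ac distrib_left)
    also have "\<dots> \<le> \<rho> * (sqrt 2 * r) * (((1 - mfw_eta 1) * G + real (K - 1) * (L * ((1 / real K) * r))) / mfw_eta K)
                  + \<rho> * (\<rho> * r) * (real K * (G + L * r))"
      using Se Sg rp r0 by (intro add_mono mult_left_mono) auto
    also have "\<dots> = (1/real K) * (sqrt 2 * r * (((1 - mfw_eta 1) * G + real (K-1) * (L*((1/real K)*r))) / mfw_eta K))
          + (1/real K) * (r * (G + L*r))"
      using Kp by (simp add: \<rho>_def field_simps)
    finally show ?thesis .
  qed
  have NM: "(1/real K) * (sqrt 2 * r * (((1 - mfw_eta 1) * G + real (K-1) * (L*((1/real K)*r))) / mfw_eta K))
          + (1/real K) * (r * (G + L*r)) + L * (1/real K) * r^2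
        \<le> L * r^2 / (2 * real K) + r / 2 * (3 * N + 1) / real K powr (1/3)"
    by (rule num_main[OF K1 _ L0 r0]) (use NG NL in \<open>auto simp: G_def\<close>)
  have E: "a / exp 1 \<le> c ^ (K - 1) * a"
  proof -
    have "a / exp 1 = exp (-1) * a" by (simp add: exp_minus field_simps)
    also have "\<dots> \<le> c ^ (K - 1) * a" using one_minus_pow_ge[OF K1] a0 by (simp add: c_def mult_right_mono)
    finally show ?thesis .
  qed
  have X0': "0 \<le> c ^ K * f (X 0)" using c01 X0 by simp
  have "a / exp 1 - f (X K) \<le> (\<Sum>k=1..K. \<rho> * c ^ (K - k) * (had (Hg k) (ones - X k) \<bullet> (xs - v k)))
          + (\<Sum>k=1..K. \<rho> * err k) + L * \<rho> * r^2"
  proof -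
    have U2: "f (X K) \<ge> c ^ K * f (X 0) + 1 * c ^ (K - 1) * a
           + (\<Sum>k=1..K. c ^ (K - k) * \<rho> * Qk k) - L * \<rho> * r^2"
      using U by (simp only: Krho KL)
    show ?thesis using U2 S1 S2 E X0' by linarith
  qed
  then show ?thesis using S3 NM by (simp add: \<rho>_def c_def a_def)
qed

end


lemma had_cont: "continuous_on UNIV (\<lambda>z::(real^'n) \<times> (real^'n). had (fst z) (snd z))"
  unfolding had_def by (intro continuous_on_vec_lambda continuous_intros)

lemma had_meas[measurable]:
  fixes a b :: "'w \<Rightarrow> real^'n"
  assumes "a \<in> borel_measurable N" "b \<in> borel_measurable N"
  shows "(\<lambda>\<omega>. had (a \<omega>) (b \<omega>)) \<in> borel_measurable N"
  using borel_measurable_continuous_Pair[OF assms had_cont] .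

lemma mfw_x_meas:
  fixes v :: "nat \<Rightarrow> 'w \<Rightarrow> real^'n"
  assumes "\<And>j. j \<in> {1..k} \<Longrightarrow> v j \<in> borel_measurable N"
  shows "(\<lambda>\<omega>. mfw_x K (\<lambda>j. v j \<omega>) k) \<in> borel_measurable N"
  using assms
proof (induction k)
  case 0
  then show ?case by simp
next
  case (Suc k)
  have a: "(\<lambda>\<omega>. mfw_x K (\<lambda>j. v j \<omega>) k) \<in> borel_measurable N" using Suc by auto
  have b: "v (Suc k) \<in> borel_measurable N" using Suc by auto
  show ?case using a b by (simp add: mfw_x.simps(2))
qed

lemma mfw_g_meas:
  fixes G :: "nat \<Rightarrow> 'w \<Rightarrow> real^'n"
  assumes "\<And>j. j \<in> {1..k} \<Longrightarrow> G j \<in> borel_measurable N"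
  shows "(\<lambda>\<omega>. mfw_g eta (\<lambda>j. G j \<omega>) k) \<in> borel_measurable N"
  using assms
proof (induction k)
  case 0
  then show ?case by simp
next
  case (Suc k)
  have a: "(\<lambda>\<omega>. mfw_g eta (\<lambda>j. G j \<omega>) k) \<in> borel_measurable N" using Suc by auto
  have b: "G (Suc k) \<in> borel_measurable N" using Suc by auto
  show ?case using a b by simp
qed

lemma unit_cube_cbox: "unit_cube = cbox 0 (ones::real^'n)"
  by (auto simp: mem_unit_cube interval_cbox_cart[symmetric] less_eq_vec_def)

lemma cube_compact: "compact (unit_cube :: (real^'n) set)"
  by (simp add: unit_cube_cbox)

lemma cont_comp_meas:
  fixes \<phi> :: "real^'n \<Rightarrow> 'b::{second_countable_topology, real_normed_vector}"
  assumes c: "continuous_on unit_cube \<phi>" and X: "X \<in> borel_measurable N"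
    and Xc: "\<And>\<omega>. \<omega> \<in> space N \<Longrightarrow> X \<omega> \<in> unit_cube"
  shows "(\<lambda>\<omega>. \<phi> (X \<omega>)) \<in> borel_measurable N"
proof -
  have cl: "unit_cube \<in> sets borel" using cube_compact by (intro borel_closed compact_imp_closed)
  have "(\<lambda>y. if y \<in> unit_cube then \<phi> y else 0) \<in> borel_measurable borel"
    by (rule borel_measurable_continuous_on_if[OF cl c]) (simp add: continuous_on_const)
  then have "(\<lambda>\<omega>. (\<lambda>y. if y \<in> unit_cube then \<phi> y else 0) (X \<omega>)) \<in> borel_measurable N"
    using X by (rule measurable_compose[rotated])
  then show ?thesis
    by (rule measurable_cong[THEN iffD1, rotated]) (simp add: Xc)
qed

lemma mfw_g_int:
  fixes Y :: "nat \<Rightarrow> 'w \<Rightarrow> real^'n" and W :: "'w \<Rightarrow> real^'n"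
  assumes "\<And>j i. j \<in> {1..k} \<Longrightarrow> integrable M (\<lambda>\<omega>. Y j \<omega> $ i * W \<omega> $ i)"
  shows "integrable M (\<lambda>\<omega>. mfw_g eta (\<lambda>j. Y j \<omega>) k $ i * W \<omega> $ i)"
  using assms
proof (induction k)
  case 0
  then show ?case by simp
next
  case (Suc k)
  have a: "integrable M (\<lambda>\<omega>. mfw_g eta (\<lambda>j. Y j \<omega>) k $ i * W \<omega> $ i)" using Suc by auto
  have b: "integrable M (\<lambda>\<omega>. Y (Suc k) \<omega> $ i * W \<omega> $ i)" using Suc by auto
  have eq: "(\<lambda>\<omega>. mfw_g eta (\<lambda>j. Y j \<omega>) (Suc k) $ i * W \<omega> $ i)
      = (\<lambda>\<omega>. (1 - eta (Suc k)) * (mfw_g eta (\<lambda>j. Y j \<omega>) k $ i * W \<omega> $ i) + eta (Suc k) * (Y (Suc k) \<omega> $ i * W \<omega> $ i))"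
    by (simp add: algebra_simps)
  show ?case unfolding eq using a b by simp
qed

lemma inner_int:
  fixes Y :: "'w \<Rightarrow> real^'n" and W :: "'w \<Rightarrow> real^'n"
  assumes "\<And>i. integrable M (\<lambda>\<omega>. Y \<omega> $ i * W \<omega> $ i)"
  shows "integrable M (\<lambda>\<omega>. Y \<omega> \<bullet> W \<omega>)" "integral\<^sup>L M (\<lambda>\<omega>. Y \<omega> \<bullet> W \<omega>) = (\<Sum>i\<in>UNIV. integral\<^sup>L M (\<lambda>\<omega>. Y \<omega> $ i * W \<omega> $ i))"
  using assms by (simp_all add: inner_cart integral_sum)

lemma mfw_g_integral:
  fixes Y Z :: "nat \<Rightarrow> 'w \<Rightarrow> real^'n" and W :: "'w \<Rightarrow> real^'n"
  assumes iY: "\<And>j i. j \<in> {1..k} \<Longrightarrow> integrable M (\<lambda>\<omega>. Y j \<omega> $ i * W \<omega> $ i)"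
    and iZ: "\<And>j i. j \<in> {1..k} \<Longrightarrow> integrable M (\<lambda>\<omega>. Z j \<omega> $ i * W \<omega> $ i)"
    and eq: "\<And>j. j \<in> {1..k} \<Longrightarrow> integral\<^sup>L M (\<lambda>\<omega>. Y j \<omega> \<bullet> W \<omega>) = integral\<^sup>L M (\<lambda>\<omega>. Z j \<omega> \<bullet> W \<omega>)"
  shows "integral\<^sup>L M (\<lambda>\<omega>. mfw_g eta (\<lambda>j. Y j \<omega>) k \<bullet> W \<omega>) = integral\<^sup>L M (\<lambda>\<omega>. mfw_g eta (\<lambda>j. Z j \<omega>) k \<bullet> W \<omega>)"
  using iY iZ eq
proof (induction k)
  case 0
  then show ?case by simp
next
  case (Suc k)
  have IH: "integral\<^sup>L M (\<lambda>\<omega>. mfw_g eta (\<lambda>j. Y j \<omega>) k \<bullet> W \<omega>) = integral\<^sup>L M (\<lambda>\<omega>. mfw_g eta (\<lambda>j. Z j \<omega>) k \<bullet> W \<omega>)"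
    using Suc.IH Suc.prems by auto
  have iY1: "integrable M (\<lambda>\<omega>. mfw_g eta (\<lambda>j. Y j \<omega>) k \<bullet> W \<omega>)"
    by (rule inner_int(1), rule mfw_g_int) (use Suc.prems in auto)
  have iZ1: "integrable M (\<lambda>\<omega>. mfw_g eta (\<lambda>j. Z j \<omega>) k \<bullet> W \<omega>)"
    by (rule inner_int(1), rule mfw_g_int) (use Suc.prems in auto)
  have iY2: "integrable M (\<lambda>\<omega>. Y (Suc k) \<omega> \<bullet> W \<omega>)"
    by (rule inner_int(1)) (use Suc.prems in auto)
  have iZ2: "integrable M (\<lambda>\<omega>. Z (Suc k) \<omega> \<bullet> W \<omega>)"
    by (rule inner_int(1)) (use Suc.prems in auto)
  have e2: "integral\<^sup>L M (\<lambda>\<omega>. Y (Suc k) \<omega> \<bullet> W \<omega>) = integral\<^sup>L M (\<lambda>\<omega>. Z (Suc k) \<omega> \<bullet> W \<omega>)"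
    using Suc.prems by auto
  have dY: "(\<lambda>\<omega>. mfw_g eta (\<lambda>j. Y j \<omega>) (Suc k) \<bullet> W \<omega>) =
      (\<lambda>\<omega>. (1 - eta (Suc k)) * (mfw_g eta (\<lambda>j. Y j \<omega>) k \<bullet> W \<omega>) + eta (Suc k) * (Y (Suc k) \<omega> \<bullet> W \<omega>))"
    by (simp add: inner_add_left)
  have dZ: "(\<lambda>\<omega>. mfw_g eta (\<lambda>j. Z j \<omega>) (Suc k) \<bullet> W \<omega>) =
      (\<lambda>\<omega>. (1 - eta (Suc k)) * (mfw_g eta (\<lambda>j. Z j \<omega>) k \<bullet> W \<omega>) + eta (Suc k) * (Z (Suc k) \<omega> \<bullet> W \<omega>))"
    by (simp add: inner_add_left)
  show ?case unfolding dY dZ using iY1 iZ1 iY2 iZ2 IH e2 by simp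
qed


lemma vec_nth_meas[measurable]:
  fixes G :: "'w \<Rightarrow> real^'n"
  assumes "G \<in> borel_measurable N"
  shows "(\<lambda>\<omega>. G \<omega> $ i) \<in> borel_measurable N"
proof -
  have "continuous_on UNIV (\<lambda>x::real^'n. x $ i)" by (intro continuous_intros)
  then show ?thesis using borel_measurable_continuous_on[OF _ assms] by blast
qed

lemma noise_step:
  fixes M :: "'w measure" and G D W :: "'w \<Rightarrow> real^'n"
  assumes P: "prob_space M" and sub: "subalgebra M Fj"
    and Gm: "G \<in> borel_measurable M" and Gi: "\<And>i. integrable M (\<lambda>\<omega>. G \<omega> $ i)"
    and Wm: "W \<in> borel_measurable Fj" and Wb: "\<And>\<omega> i. \<omega> \<in> space M \<Longrightarrow> \<bar>W \<omega> $ i\<bar> \<le> 1"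
    and Dm: "D \<in> borel_measurable M" and Db: "\<And>\<omega> i. \<omega> \<in> space M \<Longrightarrow> \<bar>D \<omega> $ i\<bar> \<le> B"
    and unb: "\<And>i. AE \<omega> in M. real_cond_exp M Fj (\<lambda>\<omega>. G \<omega> $ i) \<omega> = D \<omega> $ i"
  shows "integrable M (\<lambda>\<omega>. G \<omega> $ i * W \<omega> $ i)" "integrable M (\<lambda>\<omega>. D \<omega> $ i * W \<omega> $ i)"
    "integral\<^sup>L M (\<lambda>\<omega>. G \<omega> \<bullet> W \<omega>) = integral\<^sup>L M (\<lambda>\<omega>. D \<omega> \<bullet> W \<omega>)"
proof -
  interpret prob_space M by (rule P)
  have fms: "finite_measure_subalgebra M Fj"
    by (simp add: finite_measure_subalgebra_def finite_measure_subalgebra_axioms_def sub)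
  interpret sigma_finite_subalgebra M Fj by (rule finite_measure_subalgebra_is_sigma_finite[OF fms])
  have WmM: "W \<in> borel_measurable M" by (rule measurable_from_subalg[OF sub Wm])
  have iGW: "integrable M (\<lambda>\<omega>. G \<omega> $ i * W \<omega> $ i)" for i
  proof (rule Bochner_Integration.integrable_bound[OF Gi[of i]])
    show "(\<lambda>\<omega>. G \<omega> $ i * W \<omega> $ i) \<in> borel_measurable M" using Gm WmM by measurable
    show "AE \<omega> in M. norm (G \<omega> $ i * W \<omega> $ i) \<le> norm (G \<omega> $ i)"
      using Wb by (auto simp: abs_mult intro!: mult_left_le)
  qed
  then show "integrable M (\<lambda>\<omega>. G \<omega> $ i * W \<omega> $ i)" .
  have iDW: "integrable M (\<lambda>\<omega>. D \<omega> $ i * W \<omega> $ i)" for i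
  proof (rule integrable_const_bound[where B=B])
    show "AE \<omega> in M. norm (D \<omega> $ i * W \<omega> $ i) \<le> B"
    proof (rule AE_I2)
      fix \<omega> assume w: "\<omega> \<in> space M"
      have B0: "0 \<le> B" using Db[OF w, of i] abs_ge_zero[of "D \<omega> $ i"] by linarith
      have "\<bar>D \<omega> $ i\<bar> * \<bar>W \<omega> $ i\<bar> \<le> B * 1"
        using Db[OF w] Wb[OF w] B0 by (intro mult_mono) auto
      then show "norm (D \<omega> $ i * W \<omega> $ i) \<le> B" by (simp add: abs_mult)
    qed
    show "(\<lambda>\<omega>. D \<omega> $ i * W \<omega> $ i) \<in> borel_measurable M" using Dm WmM by measurable
  qed
  then show "integrable M (\<lambda>\<omega>. D \<omega> $ i * W \<omega> $ i)" .
  have comp: "integral\<^sup>L M (\<lambda>\<omega>. G \<omega> $ i * W \<omega> $ i) = integral\<^sup>L M (\<lambda>\<omega>. D \<omega> $ i * W \<omega> $ i)" for i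
  proof -
    have i1: "integrable M (\<lambda>\<omega>. W \<omega> $ i * G \<omega> $ i)" using iGW[of i] by (simp add: mult.commute)
    have "integral\<^sup>L M (\<lambda>\<omega>. G \<omega> $ i * W \<omega> $ i) = integral\<^sup>L M (\<lambda>\<omega>. W \<omega> $ i * G \<omega> $ i)"
      by (simp add: mult.commute)
    also have "\<dots> = integral\<^sup>L M (\<lambda>\<omega>. W \<omega> $ i * real_cond_exp M Fj (\<lambda>\<omega>. G \<omega> $ i) \<omega>)"
      using real_cond_exp_intg(2)[OF i1 vec_nth_meas[OF Wm] vec_nth_meas[OF Gm]] by simp
    also have "\<dots> = integral\<^sup>L M (\<lambda>\<omega>. W \<omega> $ i * D \<omega> $ i)"
    proof (rule integral_cong_AE)
      show "(\<lambda>\<omega>. W \<omega> $ i * real_cond_exp M Fj (\<lambda>\<omega>. G \<omega> $ i) \<omega>) \<in> borel_measurable M"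
        using WmM by measurable
      show "(\<lambda>\<omega>. W \<omega> $ i * D \<omega> $ i) \<in> borel_measurable M" using WmM Dm by measurable
      show "AE \<omega> in M. W \<omega> $ i * real_cond_exp M Fj (\<lambda>\<omega>. G \<omega> $ i) \<omega> = W \<omega> $ i * D \<omega> $ i"
        using unb[of i] by eventually_elim simp
    qed
    also have "\<dots> = integral\<^sup>L M (\<lambda>\<omega>. D \<omega> $ i * W \<omega> $ i)" by (simp add: mult.commute)
    finally show ?thesis .
  qed
  show "integral\<^sup>L M (\<lambda>\<omega>. G \<omega> \<bullet> W \<omega>) = integral\<^sup>L M (\<lambda>\<omega>. D \<omega> \<bullet> W \<omega>)"
    using inner_int(2)[of M G W, OF iGW] inner_int(2)[of M D W, OF iDW] comp by simp
qed


theorem theorem1: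
  fixes C :: "(real^'n) set"
    and f :: "nat \<Rightarrow> real^'n \<Rightarrow> real" and df :: "nat \<Rightarrow> real^'n \<Rightarrow> real^'n"
    and T K :: nat and L0 \<sigma> M0 :: real
    and M :: "'w measure" and F :: "nat \<Rightarrow> 'w measure"
    and v :: "nat \<Rightarrow> nat \<Rightarrow> 'w \<Rightarrow> real^'n"
    and G :: "nat \<Rightarrow> nat \<Rightarrow> 'w \<Rightarrow> real^'n"
    and xstar :: "real^'n"
  defines "x \<equiv> (\<lambda>t k \<omega>. mfw_x K (\<lambda>j. v t j \<omega>) k)"
      and "g \<equiv> (\<lambda>t k \<omega>. mfw_g mfw_eta (\<lambda>j. G t j \<omega>) k)"
      and "N0 \<equiv> max (4 powr (2/3) * (SUP p\<in>{1..T} \<times> space M. (norm (df (fst p) (mfw_x K (\<lambda>j. v (fst p) j (snd p)) 1)))\<^sup>2))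
                     (4 * \<sigma>\<^sup>2 + 6 * (L0 * radius C)\<^sup>2)"
  assumes C_sub: "C \<subseteq> unit_cube" and C_convex: "convex C" and C_down: "down_closed C"
      and C_zero: "0 \<in> C"
      and T_pos: "T \<ge> 1" and K_pos: "K \<ge> 1"
      and f_nonneg: "\<And>t x. t \<in> {1..T} \<Longrightarrow> x \<in> unit_cube \<Longrightarrow> f t x \<ge> 0"
      and f_DR: "\<And>t. t \<in> {1..T} \<Longrightarrow> DR_submodular (f t) (df t)"
      and f_smooth: "\<And>t. t \<in> {1..T} \<Longrightarrow> smooth_on_cube L0 (df t)"
      and M_prob: "prob_space M"
      and F_sub: "\<And>j. subalgebra M (F j)"
      and F_mono: "\<And>i j. i \<le> j \<Longrightarrow> sets (F i) \<subseteq> sets (F j)"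
      and v_in: "\<And>t k \<omega>. t \<in> {1..T} \<Longrightarrow> k \<in> {1..K} \<Longrightarrow> \<omega> \<in> space M \<Longrightarrow> v t k \<omega> \<in> C"
      and v_meas: "\<And>t k. t \<in> {1..T} \<Longrightarrow> k \<in> {1..K} \<Longrightarrow> v t k \<in> borel_measurable (F (qidx K t 1))"
      and G_meas: "\<And>t k. t \<in> {1..T} \<Longrightarrow> k \<in> {1..K} \<Longrightarrow> G t k \<in> borel_measurable (F (qidx K t k + 1))"
      and G_int: "\<And>t k i. t \<in> {1..T} \<Longrightarrow> k \<in> {1..K} \<Longrightarrow> integrable M (\<lambda>\<omega>. G t k \<omega> $ i)"
      and G_unbiased: "\<And>t k i. t \<in> {1..T} \<Longrightarrow> k \<in> {1..K} \<Longrightarrow>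
            AE \<omega> in M. real_cond_exp M (F (qidx K t k)) (\<lambda>\<omega>. G t k \<omega> $ i) \<omega> = df t (x t k \<omega>) $ i"
      and G_var_int: "\<And>t k. t \<in> {1..T} \<Longrightarrow> k \<in> {1..K} \<Longrightarrow>
            integrable M (\<lambda>\<omega>. (norm (G t k \<omega> - df t (x t k \<omega>)))\<^sup>2)"
      and G_var: "\<And>t k. t \<in> {1..T} \<Longrightarrow> k \<in> {1..K} \<Longrightarrow>
            AE \<omega> in M. real_cond_exp M (F (qidx K t k)) (\<lambda>\<omega>. (norm (G t k \<omega> - df t (x t k \<omega>)))\<^sup>2) \<omega> \<le> \<sigma>\<^sup>2"
      and regret: "\<And>k \<tau> u \<omega>. k \<in> {1..K} \<Longrightarrow> \<tau> \<in> {1..T} \<Longrightarrow> u \<in> C \<Longrightarrow> \<omega> \<in> space M \<Longrightarrow>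
            (\<Sum>s=1..\<tau>. had (g s k \<omega>) (ones - x s k \<omega>) \<bullet> u)
          - (\<Sum>s=1..\<tau>. had (g s k \<omega>) (ones - x s k \<omega>) \<bullet> v s k \<omega>) \<le> M0 * sqrt (real \<tau>)"
      and xstar_in: "xstar \<in> C"
      and xstar_max: "\<And>y. y \<in> C \<Longrightarrow> (\<Sum>t=1..T. f t y) \<le> (\<Sum>t=1..T. f t xstar)"
  shows "(1 / exp 1) * (\<Sum>t=1..T. f t xstar) - (\<Sum>t=1..T. integral\<^sup>L M (\<lambda>\<omega>. f t (x t K \<omega>)))
         \<le> M0 * sqrt (real T) + L0 * (radius C)\<^sup>2 * real T / (2 * real K)
           + radius C / 2 * (3 * N0 + 1) * real T / (real K powr (1/3))"
proof -
  interpret P: prob_space M by (rule M_prob)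
  define r where "r = radius C"
  have Ccube: "\<And>y. y \<in> C \<Longrightarrow> y \<in> unit_cube" using C_sub by auto
  have cube_norm: "norm y \<le> real CARD('n)" if "y \<in> unit_cube" for y :: "real^'n"
  proof -
    have "norm y \<le> (\<Sum>i\<in>UNIV. \<bar>y $ i\<bar>)" by (rule norm_le_l1_cart)
    also have "\<dots> \<le> (\<Sum>i\<in>(UNIV::'n set). 1)" using that by (intro sum_mono) (auto simp: mem_unit_cube)
    finally show ?thesis by simp
  qed
  have rC: "norm y \<le> r" if "y \<in> C" for y
    unfolding r_def radius_def
    by (rule cSUP_upper[OF that]) (use cube_norm Ccube in \<open>auto intro!: bdd_aboveI2\<close>)
  have r0: "r \<ge> 0" using rC[OF C_zero] norm_ge_zero order_trans by blast
  have oc: "(ones::real^'n) \<in> unit_cube" "(0::real^'n) \<in> unit_cube" by (auto simp: mem_unit_cube)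
  have L0nn: "L0 \<ge> 0"
  proof -
    have "norm (df 1 0 - df 1 ones) \<le> L0 * norm (0 - (ones::real^'n))"
      using f_smooth[of 1] T_pos oc by (auto simp: smooth_on_cube_def)
    moreover have "norm (0 - (ones::real^'n)) > 0"
    proof -
      have "(ones::real^'n) \<noteq> 0" by (metis ones_nth vec_eq_iff zero_index zero_neq_one)
      then show ?thesis by simp
    qed
    ultimately show ?thesis by (metis norm_ge_zero order_trans zero_le_mult_iff not_le less_le)
  qed
  have vcube: "v t k \<omega> \<in> unit_cube" if "t \<in> {1..T}" "k \<in> {1..K}" "\<omega> \<in> space M" for t k \<omega>
    using v_in[OF that] Ccube by blast
  have xcube: "x t k \<omega> \<in> unit_cube" if "t \<in> {1..T}" "k \<le> K" "\<omega> \<in> space M" for t k \<omega>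
    unfolding x_def by (rule mfw_x_cube[OF K_pos]) (use vcube that in auto)
  have xmeas: "x t k \<in> borel_measurable (F (qidx K t 1))" if "t \<in> {1..T}" "k \<le> K" for t k
    unfolding x_def by (rule mfw_x_meas) (use v_meas that in auto)
  have xmeasM: "x t k \<in> borel_measurable M" if "t \<in> {1..T}" "k \<le> K" for t k
    by (rule measurable_from_subalg[OF F_sub xmeas[OF that]])
  have dfcont: "continuous_on unit_cube (df t)" if "t \<in> {1..T}" for t
  proof -
    have "L0-lipschitz_on unit_cube (df t)"
      using f_smooth[OF that] L0nn by (auto simp: lipschitz_on_def smooth_on_cube_def dist_norm)
    then show ?thesis by (rule lipschitz_on_continuous_on)
  qed
  have fcont: "continuous_on unit_cube (f t)" if "t \<in> {1..T}" for t
  proof (rule differentiable_imp_continuous_on)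
    show "f t differentiable_on unit_cube"
      using f_DR[OF that] unfolding DR_submodular_def differentiable_on_def differentiable_def by blast
  qed
  define Bd where "Bd = (\<Sum>t\<in>{1..T}. norm (df t 0)) + L0 * real CARD('n)"
  have dfbound: "norm (df t y) \<le> Bd" if "t \<in> {1..T}" "y \<in> unit_cube" for t y
  proof -
    have "norm (df t y - df t 0) \<le> L0 * norm (y - 0)"
      using f_smooth[OF that(1)] that(2) oc(2) unfolding smooth_on_cube_def by blast
    also have "\<dots> \<le> L0 * real CARD('n)" using cube_norm[OF that(2)] L0nn by (intro mult_left_mono) auto
    finally have a: "norm (df t y) \<le> norm (df t 0) + L0 * real CARD('n)"
      using norm_triangle_sub[of "df t y" "df t 0"] by simp
    have "norm (df t 0) \<le> (\<Sum>t\<in>{1..T}. norm (df t 0))"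
      using that(1) by (intro member_le_sum) auto
    then show ?thesis using a by (simp add: Bd_def)
  qed
  have NG: "4 powr (2/3) * (norm (df t (x t 1 \<omega>)))^2 \<le> N0" if "t \<in> {1..T}" "\<omega> \<in> space M" for t \<omega>
  proof -
    have "(norm (df t (x t 1 \<omega>)))^2 \<le> (SUP p\<in>{1..T} \<times> space M. (norm (df (fst p) (mfw_x K (\<lambda>j. v (fst p) j (snd p)) 1)))\<^sup>2)"
    proof -
      have "(norm (df t (x t 1 \<omega>)))^2 = (\<lambda>p. (norm (df (fst p) (mfw_x K (\<lambda>j. v (fst p) j (snd p)) 1)))\<^sup>2) (t, \<omega>)"
        by (simp add: x_def)
      also have "\<dots> \<le> (SUP p\<in>{1..T} \<times> space M. (norm (df (fst p) (mfw_x K (\<lambda>j. v (fst p) j (snd p)) 1)))\<^sup>2)"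
      proof (rule cSUP_upper)
        show "(t, \<omega>) \<in> {1..T} \<times> space M" using that by auto
        show "bdd_above ((\<lambda>p. (norm (df (fst p) (mfw_x K (\<lambda>j. v (fst p) j (snd p)) 1)))\<^sup>2) ` ({1..T} \<times> space M))"
        proof (rule bdd_aboveI2)
          fix p assume p: "p \<in> {1..T} \<times> space M"
          have "x (fst p) 1 (snd p) \<in> unit_cube" using p K_pos by (intro xcube) auto
          then have "norm (df (fst p) (x (fst p) 1 (snd p))) \<le> Bd" using p by (intro dfbound) auto
          then show "(norm (df (fst p) (mfw_x K (\<lambda>j. v (fst p) j (snd p)) 1)))\<^sup>2 \<le> Bd^2"
            by (intro power_mono) (auto simp: x_def)
        qed
      qed
      finally show ?thesis .
    qed
    then have "4 powr (2/3) * (norm (df t (x t 1 \<omega>)))^2 \<le> 4 powr (2/3) * (SUP p\<in>{1..T} \<times> space M. (norm (df (fst p) (mfw_x K (\<lambda>j. v (fst p) j (snd p)) 1)))\<^sup>2)"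
      by (intro mult_left_mono) auto
    then show ?thesis unfolding N0_def by linarith
  qed
  have NL: "6 * (L0 * r)^2 \<le> N0"
  proof -
    have "0 \<le> 4 * \<sigma>\<^sup>2" by simp
    then show ?thesis unfolding N0_def r_def by linarith
  qed
  define Bc where "Bc = L0 * r^2 / (2 * real K) + r / 2 * (3 * N0 + 1) / real K powr (1/3)"
  define wt where "wt k = (1 / real K) * (1 - 1 / real K) ^ (K - k)" for k
  define Hh where "Hh t k \<omega> = had (mfw_g mfw_eta (\<lambda>j. df t (x t j \<omega>)) k) (ones - x t k \<omega>) \<bullet> (xstar - v t k \<omega>)" for t k \<omega>
  have PB: "f t xstar / exp 1 - f t (x t K \<omega>) \<le> (\<Sum>k=1..K. wt k * Hh t k \<omega>) + Bc"
    if t: "t \<in> {1..T}" and w: "\<omega> \<in> space M" for t \<omega>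
  proof -
    interpret R: mfw_round "f t" "df t" K "\<lambda>j. v t j \<omega>" xstar L0 r
    proof
      show "1 \<le> K" by (rule K_pos)
      show "DR_submodular (f t) (df t)" using f_DR[OF t] .
      show "smooth_on_cube L0 (df t)" using f_smooth[OF t] .
      show "\<And>y. y \<in> unit_cube \<Longrightarrow> 0 \<le> f t y" using f_nonneg[OF t] .
      show "\<And>k. k \<in> {1..K} \<Longrightarrow> v t k \<omega> \<in> unit_cube" using vcube t w by blast
      show "\<And>k. k \<in> {1..K} \<Longrightarrow> norm (v t k \<omega>) \<le> r" using v_in t w rC by blast
      show "xstar \<in> unit_cube" using Ccube xstar_in .
      show "norm xstar \<le> r" using rC xstar_in .
      show "0 \<le> L0" by (rule L0nn)
    qed
    have "f t xstar / exp 1 - f t (R.X K) \<le> (\<Sum>k=1..K. (1 / real K) * (1 - 1 / real K) ^ (K - k) * (had (R.Hg k) (ones - R.X k) \<bullet> (xstar - v t k \<omega>)))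
           + (L0 * r^2 / (2 * real K) + r / 2 * (3 * N0 + 1) / real K powr (1/3))"
      by (rule R.round_bound) (use NG[OF t w] NL in \<open>simp_all add: x_def\<close>)
    then show ?thesis by (simp add: Bc_def wt_def Hh_def x_def)
  qed
  have spF: "space (F i) = space M" for i using F_sub[of i] by (simp add: subalgebra_def)
  define D where "D t j \<omega> = df t (x t j \<omega>)" for t j \<omega>
  define W where "W t k \<omega> = had (ones - x t k \<omega>) (xstar - v t k \<omega>)" for t k \<omega>
  define Gg where "Gg t k \<omega> = had (g t k \<omega>) (ones - x t k \<omega>) \<bullet> (xstar - v t k \<omega>)" for t k \<omega>
  have Dmeas: "D t j \<in> borel_measurable (F (qidx K t 1))" if "t \<in> {1..T}" "j \<le> K" for t j
    unfolding D_def by (rule cont_comp_meas[OF dfcont[OF that(1)] xmeas[OF that]]) (use xcube that spF in auto)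
  have DmeasM: "D t j \<in> borel_measurable M" if "t \<in> {1..T}" "j \<le> K" for t j
    by (rule measurable_from_subalg[OF F_sub Dmeas[OF that]])
  have Db: "\<bar>D t j \<omega> $ i\<bar> \<le> Bd" if "t \<in> {1..T}" "j \<le> K" "\<omega> \<in> space M" for t j \<omega> i
    using component_le_norm_cart[of "D t j \<omega>" i] dfbound[OF that(1) xcube[OF that]] by (simp add: D_def)
  have Wmeas: "W t k \<in> borel_measurable (F (qidx K t 1))" if "t \<in> {1..T}" "k \<in> {1..K}" for t k
  proof -
    have "x t k \<in> borel_measurable (F (qidx K t 1))" using xmeas that by auto
    moreover have "v t k \<in> borel_measurable (F (qidx K t 1))" using v_meas that by auto
    ultimately show ?thesis unfolding W_def by measurable
  qed
  have Wb: "\<bar>W t k \<omega> $ i\<bar> \<le> 1" if "t \<in> {1..T}" "k \<in> {1..K}" "\<omega> \<in> space M" for t k \<omega> i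
  proof -
    have a: "0 \<le> x t k \<omega> $ i" "x t k \<omega> $ i \<le> 1" using xcube[of t k \<omega>] that by (auto simp: mem_unit_cube)
    have b: "0 \<le> v t k \<omega> $ i" "v t k \<omega> $ i \<le> 1" using vcube[OF that] by (auto simp: mem_unit_cube)
    have c: "0 \<le> xstar $ i" "xstar $ i \<le> 1" using Ccube[OF xstar_in] by (auto simp: mem_unit_cube)
    have "\<bar>1 - x t k \<omega> $ i\<bar> * \<bar>xstar $ i - v t k \<omega> $ i\<bar> \<le> 1 * 1"
      using a b c by (intro mult_mono) auto
    then show ?thesis by (simp add: W_def abs_mult)
  qed
  have Hh_eq: "Hh t k \<omega> = mfw_g mfw_eta (\<lambda>j. D t j \<omega>) k \<bullet> W t k \<omega>" for t k \<omega>
    by (simp add: Hh_def D_def W_def inner_had)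
  have Gg_eq: "Gg t k \<omega> = mfw_g mfw_eta (\<lambda>j. G t j \<omega>) k \<bullet> W t k \<omega>" for t k \<omega>
    by (simp add: Gg_def g_def W_def inner_had)
  have NS: "(\<forall>i. integrable M (\<lambda>\<omega>. G t j \<omega> $ i * W t k \<omega> $ i)) \<and> (\<forall>i. integrable M (\<lambda>\<omega>. D t j \<omega> $ i * W t k \<omega> $ i))
        \<and> integral\<^sup>L M (\<lambda>\<omega>. G t j \<omega> \<bullet> W t k \<omega>) = integral\<^sup>L M (\<lambda>\<omega>. D t j \<omega> \<bullet> W t k \<omega>)"
    if t: "t \<in> {1..T}" and k: "k \<in> {1..K}" and j: "j \<in> {1..k}" for t k j
  proof -
    have jK: "j \<in> {1..K}" using j k by auto
    have sub: "subalgebra (F (qidx K t j)) (F (qidx K t 1))"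
      unfolding subalgebra_def using F_mono[of "qidx K t 1" "qidx K t j"] j spF by (auto simp: qidx_def)
    have Wm: "W t k \<in> borel_measurable (F (qidx K t j))"
      by (rule measurable_from_subalg[OF sub Wmeas[OF t k]])
    have Gm: "G t j \<in> borel_measurable M" by (rule measurable_from_subalg[OF F_sub G_meas[OF t jK]])
    have unb: "\<And>i. AE \<omega> in M. real_cond_exp M (F (qidx K t j)) (\<lambda>\<omega>. G t j \<omega> $ i) \<omega> = D t j \<omega> $ i"
      using G_unbiased[OF t jK] by (simp add: D_def)
    note N = noise_step[OF M_prob F_sub Gm G_int[OF t jK] Wm Wb[OF t k] DmeasM Db unb]
    show ?thesis using N t jK by auto
  qed
  have intHh: "integrable M (Hh t k)" if t: "t \<in> {1..T}" and k: "k \<in> {1..K}" for t k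
  proof -
    have "integrable M (\<lambda>\<omega>. mfw_g mfw_eta (\<lambda>j. D t j \<omega>) k \<bullet> W t k \<omega>)"
      by (rule inner_int(1), rule mfw_g_int) (use NS[OF t k] in blast)
    then show ?thesis by (simp add: Hh_eq[abs_def])
  qed
  have intGg: "integrable M (Gg t k)" if t: "t \<in> {1..T}" and k: "k \<in> {1..K}" for t k
  proof -
    have "integrable M (\<lambda>\<omega>. mfw_g mfw_eta (\<lambda>j. G t j \<omega>) k \<bullet> W t k \<omega>)"
      by (rule inner_int(1), rule mfw_g_int) (use NS[OF t k] in blast)
    then show ?thesis by (simp add: Gg_eq[abs_def])
  qed
  have eqHG: "integral\<^sup>L M (Hh t k) = integral\<^sup>L M (Gg t k)" if t: "t \<in> {1..T}" and k: "k \<in> {1..K}" for t k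
  proof -
    have "integral\<^sup>L M (\<lambda>\<omega>. mfw_g mfw_eta (\<lambda>j. G t j \<omega>) k \<bullet> W t k \<omega>) = integral\<^sup>L M (\<lambda>\<omega>. mfw_g mfw_eta (\<lambda>j. D t j \<omega>) k \<bullet> W t k \<omega>)"
      by (rule mfw_g_integral) (use NS[OF t k] in blast)+
    then show ?thesis by (simp add: Hh_eq[abs_def] Gg_eq[abs_def])
  qed
  have intf: "integrable M (\<lambda>\<omega>. f t (x t K \<omega>))" if t: "t \<in> {1..T}" for t
  proof -
    have "compact (f t ` unit_cube)" by (rule compact_continuous_image[OF fcont[OF t] cube_compact])
    then obtain B where B: "\<And>y. y \<in> unit_cube \<Longrightarrow> norm (f t y) \<le> B"
      using compact_imp_bounded bounded_iff by (metis image_eqI)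
    show ?thesis
    proof (rule P.integrable_const_bound[where B=B])
      show "AE \<omega> in M. norm (f t (x t K \<omega>)) \<le> B" using B xcube t by auto
      show "(\<lambda>\<omega>. f t (x t K \<omega>)) \<in> borel_measurable M"
        by (rule cont_comp_meas[OF fcont[OF t] xmeasM[OF t]]) (use xcube t in auto)
    qed
  qed
  have M0nn: "M0 \<ge> 0"
  proof -
    obtain \<omega> where w: "\<omega> \<in> space M" using P.not_empty by blast
    have "1 \<in> {1..K}" "1 \<in> {1..T}" using K_pos T_pos by auto
    from regret[OF this v_in[OF \<open>1 \<in> {1..T}\<close> \<open>1 \<in> {1..K}\<close> w] w] show ?thesis by simp
  qed
  have IT: "f t xstar / exp 1 - integral\<^sup>L M (\<lambda>\<omega>. f t (x t K \<omega>)) \<le> (\<Sum>k=1..K. wt k * integral\<^sup>L M (Gg t k)) + Bc"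
    if t: "t \<in> {1..T}" for t
  proof -
    have i1: "integrable M (\<lambda>\<omega>. f t xstar / exp 1 - f t (x t K \<omega>))" using intf[OF t] by simp
    have i3: "integrable M (\<lambda>\<omega>. \<Sum>k=1..K. wt k * Hh t k \<omega>)"
    proof (rule Bochner_Integration.integrable_sum)
      fix k assume "k \<in> {1..K}"
      then have "integrable M (Hh t k)" using intHh[OF t] by auto
      then show "integrable M (\<lambda>\<omega>. wt k * Hh t k \<omega>)" by simp
    qed
    have i2: "integrable M (\<lambda>\<omega>. (\<Sum>k=1..K. wt k * Hh t k \<omega>) + Bc)"
      by (rule Bochner_Integration.integrable_add[OF i3]) simp
    have "integral\<^sup>L M (\<lambda>\<omega>. f t xstar / exp 1 - f t (x t K \<omega>)) \<le> integral\<^sup>L M (\<lambda>\<omega>. (\<Sum>k=1..K. wt k * Hh t k \<omega>) + Bc)"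
      by (rule integral_mono[OF i1 i2]) (use PB[OF t] in auto)
    moreover have "integral\<^sup>L M (\<lambda>\<omega>. f t xstar / exp 1 - f t (x t K \<omega>)) = f t xstar / exp 1 - integral\<^sup>L M (\<lambda>\<omega>. f t (x t K \<omega>))"
      using intf[OF t] by (simp add: P.prob_space)
    moreover have "integral\<^sup>L M (\<lambda>\<omega>. (\<Sum>k=1..K. wt k * Hh t k \<omega>) + Bc) = (\<Sum>k=1..K. wt k * integral\<^sup>L M (Hh t k)) + Bc"
    proof -
      have "integral\<^sup>L M (\<lambda>\<omega>. (\<Sum>k=1..K. wt k * Hh t k \<omega>) + Bc) = integral\<^sup>L M (\<lambda>\<omega>. \<Sum>k=1..K. wt k * Hh t k \<omega>) + Bc"
        by (subst Bochner_Integration.integral_add[OF i3]) (auto simp: P.prob_space)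
      also have "integral\<^sup>L M (\<lambda>\<omega>. \<Sum>k=1..K. wt k * Hh t k \<omega>) = (\<Sum>k=1..K. wt k * integral\<^sup>L M (Hh t k))"
      proof -
        have "integral\<^sup>L M (\<lambda>\<omega>. \<Sum>k=1..K. wt k * Hh t k \<omega>) = (\<Sum>k=1..K. integral\<^sup>L M (\<lambda>\<omega>. wt k * Hh t k \<omega>))"
          using Bochner_Integration.integral_sum[where I="{1..K}" and f="\<lambda>k \<omega>. wt k * Hh t k \<omega>"] intHh[OF t] by auto
        also have "\<dots> = (\<Sum>k=1..K. wt k * integral\<^sup>L M (Hh t k))" by simp
        finally show ?thesis .
      qed
      finally show ?thesis .
    qed
    moreover have "(\<Sum>k=1..K. wt k * integral\<^sup>L M (Hh t k)) = (\<Sum>k=1..K. wt k * integral\<^sup>L M (Gg t k))"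
      using eqHG[OF t] by (intro sum.cong) auto
    ultimately show ?thesis by linarith
  qed
  have SG: "(\<Sum>t=1..T. integral\<^sup>L M (Gg t k)) \<le> M0 * sqrt (real T)" if k: "k \<in> {1..K}" for k
  proof -
    have "(\<Sum>t=1..T. integral\<^sup>L M (Gg t k)) = integral\<^sup>L M (\<lambda>\<omega>. \<Sum>t=1..T. Gg t k \<omega>)"
      using Bochner_Integration.integral_sum[where I="{1..T}" and f="\<lambda>t. Gg t k"] intGg k by auto
    also have "\<dots> \<le> integral\<^sup>L M (\<lambda>\<omega>. M0 * sqrt (real T))"
    proof (rule integral_mono)
      show "integrable M (\<lambda>\<omega>. \<Sum>t=1..T. Gg t k \<omega>)"
        by (rule Bochner_Integration.integrable_sum) (use intGg k in auto)
      show "integrable M (\<lambda>\<omega>. M0 * sqrt (real T))" by simp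
      fix \<omega> assume w: "\<omega> \<in> space M"
      have "T \<in> {1..T}" using T_pos by simp
      from regret[OF k this xstar_in w]
      show "(\<Sum>t=1..T. Gg t k \<omega>) \<le> M0 * sqrt (real T)"
        by (simp add: Gg_def inner_diff_right sum_subtractf)
    qed
    also have "\<dots> = M0 * sqrt (real T)" by (simp add: P.prob_space)
    finally show ?thesis .
  qed
  have wt0: "0 \<le> wt k" for k using K_pos by (simp add: wt_def)
  have wt1: "(\<Sum>k=1..K. wt k) \<le> 1"
  proof -
    have "(\<Sum>k=1..K. wt k) \<le> (\<Sum>k=1..K. 1 / real K)"
    proof (rule sum_mono)
      fix k assume "k \<in> {1..K}"
      have "(1 - 1 / real K) ^ (K - k) \<le> 1" using K_pos by (intro power_le_one) auto
      then show "wt k \<le> 1 / real K" unfolding wt_def using K_pos by (simp add: divide_right_mono)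
    qed
    also have "\<dots> = 1" using K_pos by simp
    finally show ?thesis .
  qed
  have "(\<Sum>t=1..T. f t xstar / exp 1 - integral\<^sup>L M (\<lambda>\<omega>. f t (x t K \<omega>)))
        \<le> (\<Sum>t=1..T. (\<Sum>k=1..K. wt k * integral\<^sup>L M (Gg t k)) + Bc)"
    using IT by (intro sum_mono) auto
  also have "\<dots> = (\<Sum>k=1..K. wt k * (\<Sum>t=1..T. integral\<^sup>L M (Gg t k))) + real T * Bc"
    by (simp add: sum.distrib sum_distrib_left) (rule sum.swap)
  also have "(\<Sum>k=1..K. wt k * (\<Sum>t=1..T. integral\<^sup>L M (Gg t k))) \<le> (\<Sum>k=1..K. wt k * (M0 * sqrt (real T)))"
    using SG wt0 by (intro sum_mono mult_left_mono) auto
  also have "\<dots> = (\<Sum>k=1..K. wt k) * (M0 * sqrt (real T))" by (simp add: sum_distrib_right)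
  also have "\<dots> \<le> 1 * (M0 * sqrt (real T))" using wt1 M0nn by (intro mult_right_mono) auto
  finally have fin: "(\<Sum>t=1..T. f t xstar / exp 1 - integral\<^sup>L M (\<lambda>\<omega>. f t (x t K \<omega>))) \<le> M0 * sqrt (real T) + real T * Bc"
    by simp
  have lhs: "(1 / exp 1) * (\<Sum>t=1..T. f t xstar) - (\<Sum>t=1..T. integral\<^sup>L M (\<lambda>\<omega>. f t (x t K \<omega>)))
      = (\<Sum>t=1..T. f t xstar / exp 1 - integral\<^sup>L M (\<lambda>\<omega>. f t (x t K \<omega>)))"
    by (simp add: sum_subtractf sum_distrib_left)
  have rhs: "M0 * sqrt (real T) + real T * Bc = M0 * sqrt (real T) + L0 * (radius C)\<^sup>2 * real T / (2 * real K)
           + radius C / 2 * (3 * N0 + 1) * real T / (real K powr (1/3))"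
    by (simp add: Bc_def r_def algebra_simps)
  show ?thesis using fin lhs rhs by simp
qed


end
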